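(* Assume (A1) and (A2). There is an absolute constant $c$ such that if $n\ge c\,\bar\kappa^2r^2\log k/\tau^2$, then with high probability $$\|Q^{-1/2}(\nabla f(x^* )-n\mathbf 1)\|_2\le\widetilde O(\sqrt{nr})\quad\text{and}\quad\|Q^{-1/2}(\nabla f(x^* )-n\mathbf 1)\|_\infty\le\widetilde O(\sqrt n).$$
   Context: $A\in\mathbb{R}^{D\times k}$ is a word-topic matrix (nonnegative entries, columns summing to $1$). $x^*\in\{z\in\mathbb{R}^k_{\ge0}:\sum z_i=1\}$; a document of $n$ words $w_1,\dots,w_n$ is drawn i.i.d. from the categorical distribution on $[D]$ with probabilities $Ax^*$. Assumption (A1): $R=\mathrm{supp}(x^* )$ has $|R|\le r$ and $x^*_i\ge\tau/r$ for all $i\in R$, where $\tau\in(0,1]$. Assumption (A2): for every $r$-sparse $v\in\mathbb{R}^k$, $\|Av\|_1\ge\|v\|_1/\bar\kappa$. Vectors supported on $R$ are identified with vectors in $\mathbb{R}^R$; $\mathbf 1\in\mathbb{R}^R$ is the all-ones vector. $\hat a_w\in\mathbb{R}^R$ is the $w$-th row of $A$ restricted to the columns in $R$. The restricted log-likelihood is $f(x)=\sum_{t=1}^n\log\langle\hat a_{w_t},x\rangle$, so $\nabla f(x^* )=\sum_{t=1}^n\hat a_{w_t}/\langle\hat a_{w_t},x^*\rangle$. The Fisher information matrix is $Q=\sum_{i\in[D]:\hat a_i\neq 0}\hat a_i\hat a_i^\top/\langle\hat a_i,x^*\rangle\in\mathbb{R}^{R\times R}$ (it is positive definite under (A2)).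 "With high probability" means with probability $1-o(1)$ as $k\to\infty$, and $\widetilde O(\cdot)$ hides constant and polylogarithmic-in-$k$ factors. *)

theory Defs
  imports "HOL-Probability.Probability"
begin

text \<open>Words are indexed by {..<D}, topics by {..<k}.
  A word-topic matrix is A :: nat => nat => real (A w i = entry in row w, column i).
  Vectors indexed by a finite set I are functions nat => real (values outside I irrelevant);
  matrices on I x I are functions nat => nat => real.\<close>

definition topic_matrix :: "nat \<Rightarrow> nat \<Rightarrow> (nat \<Rightarrow> nat \<Rightarrow> real) \<Rightarrow> bool" where
  "topic_matrix D k A \<longleftrightarrow>
     (\<forall>w<D. \<forall>i<k. A w i \<ge> 0) \<and> (\<forall>i<k. (\<Sum>w<D. A w i) = 1)"

definition simplex_pt :: "nat \<Rightarrow> (nat \<Rightarrow> real) \<Rightarrow> bool" where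
  "simplex_pt k x \<longleftrightarrow> (\<forall>i<k. x i \<ge> 0) \<and> (\<forall>i\<ge>k. x i = 0) \<and> (\<Sum>i<k. x i) = 1"

definition supp_set :: "nat \<Rightarrow> (nat \<Rightarrow> real) \<Rightarrow> nat set" where
  "supp_set k x = {i. i < k \<and> x i \<noteq> 0}"

definition assm_A1 :: "nat \<Rightarrow> nat \<Rightarrow> real \<Rightarrow> (nat \<Rightarrow> real) \<Rightarrow> bool" where
  "assm_A1 k r \<tau> x \<longleftrightarrow> card (supp_set k x) \<le> r \<and> (\<forall>i\<in>supp_set k x. x i \<ge> \<tau> / real r)"

definition assm_A2 :: "nat \<Rightarrow> nat \<Rightarrow> nat \<Rightarrow> real \<Rightarrow> (nat \<Rightarrow> nat \<Rightarrow> real) \<Rightarrow> bool" where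
  "assm_A2 D k r \<kappa> A \<longleftrightarrow>
     (\<forall>v :: nat \<Rightarrow> real. (\<forall>i\<ge>k. v i = 0) \<and> card {i. i < k \<and> v i \<noteq> 0} \<le> r \<longrightarrow>
        (\<Sum>w<D. \<bar>\<Sum>i<k. A w i * v i\<bar>) \<ge> (\<Sum>i<k. \<bar>v i\<bar>) / \<kappa>)"

definition word_pmf :: "nat \<Rightarrow> nat \<Rightarrow> (nat \<Rightarrow> nat \<Rightarrow> real) \<Rightarrow> (nat \<Rightarrow> real) \<Rightarrow> nat pmf" where
  "word_pmf D k A x = embed_pmf (\<lambda>w. if w < D then (\<Sum>i<k. A w i * x i) else 0)"

definition document_pmf :: "nat \<Rightarrow> nat \<Rightarrow> nat \<Rightarrow> (nat \<Rightarrow> nat \<Rightarrow> real) \<Rightarrow> (nat \<Rightarrow> real) \<Rightarrow> (nat \<Rightarrow> nat) pmf" where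
  "document_pmf n D k A x = Pi_pmf {..<n} 0 (\<lambda>_. word_pmf D k A x)"

definition row_inner :: "nat set \<Rightarrow> (nat \<Rightarrow> nat \<Rightarrow> real) \<Rightarrow> nat \<Rightarrow> (nat \<Rightarrow> real) \<Rightarrow> real" where
  "row_inner R A w x = (\<Sum>j\<in>R. A w j * x j)"

definition grad_f :: "nat \<Rightarrow> nat set \<Rightarrow> (nat \<Rightarrow> nat \<Rightarrow> real) \<Rightarrow> (nat \<Rightarrow> real) \<Rightarrow> (nat \<Rightarrow> nat) \<Rightarrow> nat \<Rightarrow> real" where
  "grad_f n R A x ws i = (\<Sum>t<n. A (ws t) i / row_inner R A (ws t) x)"

definition fisher :: "nat \<Rightarrow> nat set \<Rightarrow> (nat \<Rightarrow> nat \<Rightarrow> real) \<Rightarrow> (nat \<Rightarrow> real) \<Rightarrow> nat \<Rightarrow> nat \<Rightarrow> real" where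
  "fisher D R A x i j =
     (\<Sum>w\<in>{w. w < D \<and> (\<exists>l\<in>R. A w l \<noteq> 0)}. A w i * A w j / row_inner R A w x)"

definition mat_mult_on :: "nat set \<Rightarrow> (nat \<Rightarrow> nat \<Rightarrow> real) \<Rightarrow> (nat \<Rightarrow> nat \<Rightarrow> real) \<Rightarrow> nat \<Rightarrow> nat \<Rightarrow> real" where
  "mat_mult_on I M N i j = (\<Sum>l\<in>I. M i l * N l j)"

definition mat_vec_on :: "nat set \<Rightarrow> (nat \<Rightarrow> nat \<Rightarrow> real) \<Rightarrow> (nat \<Rightarrow> real) \<Rightarrow> nat \<Rightarrow> real" where
  "mat_vec_on I M v i = (\<Sum>j\<in>I. M i j * v j)"

definition pos_def_on :: "nat set \<Rightarrow> (nat \<Rightarrow> nat \<Rightarrow> real) \<Rightarrow> bool" where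
  "pos_def_on I M \<longleftrightarrow> (\<forall>i\<in>I. \<forall>j\<in>I. M i j = M j i) \<and>
     (\<forall>v. (\<exists>i\<in>I. v i \<noteq> 0) \<longrightarrow> (\<Sum>i\<in>I. \<Sum>j\<in>I. v i * M i j * v j) > 0)"

definition inv_sqrt_on :: "nat set \<Rightarrow> (nat \<Rightarrow> nat \<Rightarrow> real) \<Rightarrow> nat \<Rightarrow> nat \<Rightarrow> real" where
  "inv_sqrt_on I Q = (THE M. (\<forall>i j. (i \<notin> I \<or> j \<notin> I) \<longrightarrow> M i j = 0) \<and> pos_def_on I M \<and>
      (\<forall>i\<in>I. \<forall>j\<in>I. mat_mult_on I (mat_mult_on I M M) Q i j = (if i = j then 1 else 0)))"

definition l2_on :: "nat set \<Rightarrow> (nat \<Rightarrow> real) \<Rightarrow> real" where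
  "l2_on I v = sqrt (\<Sum>i\<in>I. (v i)\<^sup>2)"

definition linf_on :: "nat set \<Rightarrow> (nat \<Rightarrow> real) \<Rightarrow> real" where
  "linf_on I v = Max ((\<lambda>i. \<bar>v i\<bar>) ` I)"

definition whitened_grad :: "nat \<Rightarrow> nat \<Rightarrow> nat \<Rightarrow> (nat \<Rightarrow> nat \<Rightarrow> real) \<Rightarrow> (nat \<Rightarrow> real) \<Rightarrow> (nat \<Rightarrow> nat) \<Rightarrow> nat \<Rightarrow> real" where
  "whitened_grad n D k A x ws =
     (let R = supp_set k x in
      mat_vec_on R (inv_sqrt_on R (fisher D R A x)) (\<lambda>i. grad_f n R A x ws i - real n))"

end

theory Submission
  imports Defs "HOL-Computational_Algebra.Formal_Power_Series"
begin

definition ip :: "nat set \<Rightarrow> (nat \<Rightarrow> real) \<Rightarrow> (nat \<Rightarrow> real) \<Rightarrow> real" where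
  "ip I u v = (\<Sum>i\<in>I. u i * v i)"
definition nr :: "nat set \<Rightarrow> (nat \<Rightarrow> real) \<Rightarrow> real" where
  "nr I v = ip I v v"
definition idm :: "nat \<Rightarrow> nat \<Rightarrow> real" where
  "idm i j = (if i = j then 1 else 0)"
definition symm :: "nat set \<Rightarrow> (nat \<Rightarrow> nat \<Rightarrow> real) \<Rightarrow> bool" where
  "symm I M \<longleftrightarrow> (\<forall>i\<in>I. \<forall>j\<in>I. M i j = M j i)"

lemma mm_assoc:
  shows "mat_mult_on I (mat_mult_on I A B) C i j = mat_mult_on I A (mat_mult_on I B C) i j"
proof -
  have "mat_mult_on I (mat_mult_on I A B) C i j = (\<Sum>l\<in>I. \<Sum>p\<in>I. A i p * B p l * C l j)"
    unfolding mat_mult_on_def by (simp add: sum_distrib_right)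
  also have "\<dots> = (\<Sum>p\<in>I. \<Sum>l\<in>I. A i p * B p l * C l j)" by (rule sum.swap)
  also have "\<dots> = mat_mult_on I A (mat_mult_on I B C) i j"
    unfolding mat_mult_on_def by (simp add: sum_distrib_left mult.assoc)
  finally show ?thesis .
qed

lemma mv_mm:
  shows "mat_vec_on I (mat_mult_on I M N) v i = mat_vec_on I M (mat_vec_on I N v) i"
proof -
  have "mat_vec_on I (mat_mult_on I M N) v i = (\<Sum>l\<in>I. \<Sum>p\<in>I. M i p * N p l * v l)"
    unfolding mat_mult_on_def mat_vec_on_def by (simp add: sum_distrib_right)
  also have "\<dots> = (\<Sum>p\<in>I. \<Sum>l\<in>I. M i p * N p l * v l)" by (rule sum.swap)
  also have "\<dots> = mat_vec_on I M (mat_vec_on I N v) i"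
    unfolding mat_vec_on_def by (simp add: sum_distrib_left mult.assoc)
  finally show ?thesis .
qed

lemma mm_idm_left: "finite I \<Longrightarrow> i \<in> I \<Longrightarrow> mat_mult_on I idm B i j = B i j"
  unfolding mat_mult_on_def idm_def by (simp add: if_distrib if_distribR sum.delta cong: if_cong)

lemma mm_idm_right: "finite I \<Longrightarrow> j \<in> I \<Longrightarrow> mat_mult_on I B idm i j = B i j"
  unfolding mat_mult_on_def idm_def by (simp add: if_distrib sum.delta' cong: if_cong)

lemma mv_idm: "finite I \<Longrightarrow> i \<in> I \<Longrightarrow> mat_vec_on I idm v i = v i"
  unfolding mat_vec_on_def idm_def by (simp add: if_distrib if_distribR sum.delta cong: if_cong)

lemma ip_mv_sym:
  assumes "finite I" "symm I M"
  shows "ip I u (mat_vec_on I M v) = ip I (mat_vec_on I M u) v"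
proof -
  have "ip I u (mat_vec_on I M v) = (\<Sum>i\<in>I. \<Sum>j\<in>I. u i * M i j * v j)"
    unfolding ip_def mat_vec_on_def by (simp add: sum_distrib_left mult.assoc)
  also have "\<dots> = (\<Sum>j\<in>I. \<Sum>i\<in>I. u i * M i j * v j)" by (rule sum.swap)
  also have "\<dots> = (\<Sum>j\<in>I. \<Sum>i\<in>I. M j i * u i * v j)"
    using assms(2) unfolding symm_def by (intro sum.cong refl) (simp add: mult.commute)
  also have "\<dots> = ip I (mat_vec_on I M u) v"
    unfolding ip_def mat_vec_on_def by (simp add: sum_distrib_right)
  finally show ?thesis .
qed

lemma qf_ip: "(\<Sum>i\<in>I. \<Sum>j\<in>I. v i * M i j * v j) = ip I v (mat_vec_on I M v)"
  unfolding ip_def mat_vec_on_def by (simp add: sum_distrib_left mult.assoc)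

lemma nr_nonneg: "nr I v \<ge> 0"
  unfolding nr_def ip_def by (simp add: sum_nonneg)

lemma mv_linear:
  "mat_vec_on I M (\<lambda>i. a * u i + b * v i) j = a * mat_vec_on I M u j + b * mat_vec_on I M v j"
  unfolding mat_vec_on_def by (simp add: sum.distrib sum_distrib_left algebra_simps)

lemma ip_linear_left:
  "ip I (\<lambda>i. a * u i + b * v i) w = a * ip I u w + b * ip I v w"
  unfolding ip_def by (simp add: sum.distrib sum_distrib_left algebra_simps)

lemma ip_linear_right:
  "ip I w (\<lambda>i. a * u i + b * v i) = a * ip I w u + b * ip I w v"
  unfolding ip_def by (simp add: sum.distrib sum_distrib_left algebra_simps)

lemma ip_comm: "ip I u v = ip I v u"
  unfolding ip_def by (simp add: mult.commute)

lemma quad_expand: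
  "ip I (\<lambda>i. a * u i + b * v i) (mat_vec_on I B (\<lambda>i. a * u i + b * v i)) =
   a\<^sup>2 * ip I u (mat_vec_on I B u) + a * b * (ip I u (mat_vec_on I B v) + ip I v (mat_vec_on I B u))
   + b\<^sup>2 * ip I v (mat_vec_on I B v)"
proof -
  have e: "mat_vec_on I B (\<lambda>i. a * u i + b * v i) = (\<lambda>j. a * mat_vec_on I B u j + b * mat_vec_on I B v j)"
    by (rule ext, rule mv_linear)
  show ?thesis unfolding e ip_linear_left ip_linear_right
    by (simp add: algebra_simps power2_eq_square)
qed

lemma nr_expand:
  "nr I (\<lambda>i. a * u i + b * v i) = a\<^sup>2 * nr I u + 2 * a * b * ip I u v + b\<^sup>2 * nr I v"
  unfolding nr_def ip_linear_left ip_linear_right by (simp add: ip_comm algebra_simps power2_eq_square)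

lemma polar:
  assumes fin: "finite I" and sym: "symm I B" and bpos: "0 < \<beta>"
    and nn: "\<And>v. 0 \<le> ip I v (mat_vec_on I B v)"
    and up: "\<And>v. ip I v (mat_vec_on I B v) \<le> \<beta> * nr I v"
  shows "nr I (mat_vec_on I B v) \<le> \<beta>\<^sup>2 * nr I v"
proof -
  define u where "u = mat_vec_on I B v"
  define a where "a = nr I u"
  define b where "b = nr I v"
  define c where "c = ip I u v"
  define d where "d = ip I v (mat_vec_on I B v)"
  define e where "e = ip I u (mat_vec_on I B u)"
  have s1: "ip I v (mat_vec_on I B u) = a"
    using ip_mv_sym[OF fin sym, of v u] unfolding a_def nr_def u_def by (simp add: ip_comm)
  have s2: "ip I u (mat_vec_on I B v) = a" unfolding a_def nr_def u_def ..
  have p1: "ip I (\<lambda>i. 1 * u i + \<beta> * v i) (mat_vec_on I B (\<lambda>i. 1 * u i + \<beta> * v i)) = e + 2 * \<beta> * a + \<beta>\<^sup>2 * d"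
    unfolding quad_expand s1 s2 d_def e_def by simp
  have q1: "ip I (\<lambda>i. 1 * u i + (-\<beta>) * v i) (mat_vec_on I B (\<lambda>i. 1 * u i + (-\<beta>) * v i)) = e - 2 * \<beta> * a + \<beta>\<^sup>2 * d"
    unfolding quad_expand s1 s2 d_def e_def by simp
  have p2: "nr I (\<lambda>i. 1 * u i + \<beta> * v i) = a + 2 * \<beta> * c + \<beta>\<^sup>2 * b"
    unfolding nr_expand a_def b_def c_def by simp
  have q2: "nr I (\<lambda>i. 1 * u i + (-\<beta>) * v i) = a - 2 * \<beta> * c + \<beta>\<^sup>2 * b"
    unfolding nr_expand a_def b_def c_def by simp
  have h1: "e + 2 * \<beta> * a + \<beta>\<^sup>2 * d \<le> \<beta> * (a + 2 * \<beta> * c + \<beta>\<^sup>2 * b)"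
    using up[of "\<lambda>i. 1 * u i + \<beta> * v i"] unfolding p1 p2 .
  have h2: "0 \<le> e - 2 * \<beta> * a + \<beta>\<^sup>2 * d"
    using nn[of "\<lambda>i. 1 * u i + (-\<beta>) * v i"] unfolding q1 .
  have h3: "0 \<le> \<beta> * (a - 2 * \<beta> * c + \<beta>\<^sup>2 * b)"
    using mult_nonneg_nonneg[OF less_imp_le[OF bpos] nr_nonneg[of I "\<lambda>i. 1 * u i + (-\<beta>) * v i"]]
    unfolding q2 .
  have "\<beta> * (4 * a) \<le> \<beta> * (2 * a + 2 * \<beta>\<^sup>2 * b)"
    using h1 h2 h3 by (simp add: algebra_simps)
  then have "4 * a \<le> 2 * a + 2 * \<beta>\<^sup>2 * b"
    using bpos by (simp add: mult_le_cancel_left_pos)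
  then have "a \<le> \<beta>\<^sup>2 * b" by simp
  then show ?thesis unfolding a_def b_def u_def .
qed

lemma mm_cong:
  "(\<And>l. l \<in> I \<Longrightarrow> A i l = A' i l) \<Longrightarrow> (\<And>l. l \<in> I \<Longrightarrow> B l m = B' l m) \<Longrightarrow>
   mat_mult_on I A B i m = mat_mult_on I A' B' i m"
  unfolding mat_mult_on_def by (intro sum.cong) auto

lemma mv_cong:
  "(\<And>l. l \<in> I \<Longrightarrow> A i l = A' i l) \<Longrightarrow> (\<And>l. l \<in> I \<Longrightarrow> w l = w' l) \<Longrightarrow>
   mat_vec_on I A w i = mat_vec_on I A' w' i"
  unfolding mat_vec_on_def by (intro sum.cong) auto

lemma ip_cong:
  "(\<And>l. l \<in> I \<Longrightarrow> u l = u' l) \<Longrightarrow> (\<And>l. l \<in> I \<Longrightarrow> w l = w' l) \<Longrightarrow>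
   ip I u w = ip I u' w'"
  unfolding ip_def by (intro sum.cong) auto

fun mpow :: "nat set \<Rightarrow> (nat \<Rightarrow> nat \<Rightarrow> real) \<Rightarrow> nat \<Rightarrow> nat \<Rightarrow> nat \<Rightarrow> real" where
  "mpow I B 0 = idm"
| "mpow I B (Suc j) = mat_mult_on I B (mpow I B j)"

lemma mpow_Suc':
  assumes "finite I" "i \<in> I" "m \<in> I"
  shows "mat_mult_on I (mpow I B j) B i m = mpow I B (Suc j) i m"
  using assms(2,3)
proof (induction j arbitrary: i m)
  case 0
  then show ?case using mm_idm_left[OF assms(1), of i B m] mm_idm_right[OF assms(1), of m B i] by simp
next
  case (Suc j)
  have "mat_mult_on I (mpow I B (Suc j)) B i m = mat_mult_on I B (mat_mult_on I (mpow I B j) B) i m"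
    by (simp add: mm_assoc)
  also have "\<dots> = mat_mult_on I B (mpow I B (Suc j)) i m"
    by (rule mm_cong) (use Suc in auto)
  finally show ?case by simp
qed

lemma mpow_add:
  assumes "finite I" "i \<in> I" "m \<in> I"
  shows "mat_mult_on I (mpow I B a) (mpow I B b) i m = mpow I B (a + b) i m"
  using assms(2,3)
proof (induction a arbitrary: i m)
  case 0
  then show ?case using mm_idm_left[OF assms(1)] by simp
next
  case (Suc a)
  have "mat_mult_on I (mpow I B (Suc a)) (mpow I B b) i m
      = mat_mult_on I B (mat_mult_on I (mpow I B a) (mpow I B b)) i m"
    by (simp add: mm_assoc)
  also have "\<dots> = mat_mult_on I B (mpow I B (a + b)) i m"
    by (rule mm_cong) (use Suc in auto)
  finally show ?case by simp
qed

lemma mpow_sym: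
  assumes "finite I" "symm I B" "i \<in> I" "m \<in> I"
  shows "mpow I B j i m = mpow I B j m i"
  using assms(3,4)
proof (induction j arbitrary: i m)
  case 0
  then show ?case by (simp add: idm_def)
next
  case (Suc j)
  have "mpow I B (Suc j) i m = (\<Sum>l\<in>I. B i l * mpow I B j l m)"
    by (simp add: mat_mult_on_def)
  also have "\<dots> = (\<Sum>l\<in>I. mpow I B j m l * B l i)"
    using Suc assms(2) unfolding symm_def by (intro sum.cong) (auto simp: mult.commute)
  also have "\<dots> = mat_mult_on I (mpow I B j) B m i" by (simp add: mat_mult_on_def)
  also have "\<dots> = mpow I B (Suc j) m i" using mpow_Suc'[OF assms(1) Suc.prems(2,1)] .
  finally show ?case .
qed

lemma mpow_symm: "finite I \<Longrightarrow> symm I B \<Longrightarrow> symm I (mpow I B j)"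
  using mpow_sym unfolding symm_def[of I "mpow I B j"] by blast

lemma ip_mv_idm: "finite I \<Longrightarrow> ip I v (mat_vec_on I idm v) = nr I v"
  unfolding nr_def by (rule ip_cong) (auto simp: mv_idm)

lemma mpow_psd:
  assumes fin: "finite I" and sym: "symm I B" and nn: "\<And>v. 0 \<le> ip I v (mat_vec_on I B v)"
  shows "0 \<le> ip I v (mat_vec_on I (mpow I B j) v)"
proof (induction j arbitrary: v rule: nat_less_induct)
  case (1 j)
  show ?case
  proof (cases j)
    case 0
    then show ?thesis using ip_mv_idm[OF fin] nr_nonneg by simp
  next
    case (Suc j1)
    show ?thesis
    proof (cases j1)
      case 0
      have "ip I v (mat_vec_on I (mpow I B j) v) = ip I v (mat_vec_on I B v)"
        unfolding Suc 0 by (intro ip_cong refl) (simp add: mm_idm_right[OF fin] mat_mult_on_def[symmetric] cong: mv_cong)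
      then show ?thesis using nn by simp
    next
      case (Suc j2)
      have e1: "mat_vec_on I (mpow I B j) v i = mat_vec_on I B (mat_vec_on I (mpow I B j2) (mat_vec_on I B v)) i" for i
      proof -
        have "mat_vec_on I (mpow I B j) v i = mat_vec_on I B (mat_vec_on I (mpow I B (Suc j2)) v) i"
          unfolding \<open>j = Suc j1\<close> \<open>j1 = Suc j2\<close> by (simp add: mv_mm)
        also have "\<dots> = mat_vec_on I B (mat_vec_on I (mat_mult_on I (mpow I B j2) B) v) i"
          by (rule mv_cong) (auto intro!: mv_cong simp: mpow_Suc'[OF fin])
        also have "\<dots> = mat_vec_on I B (mat_vec_on I (mpow I B j2) (mat_vec_on I B v)) i"
          by (rule mv_cong) (simp_all add: mv_mm)
        finally show ?thesis .
      qed
      have "ip I v (mat_vec_on I (mpow I B j) v) = ip I v (mat_vec_on I B (mat_vec_on I (mpow I B j2) (mat_vec_on I B v)))"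
        using e1 by (intro ip_cong) auto
      also have "\<dots> = ip I (mat_vec_on I B v) (mat_vec_on I (mpow I B j2) (mat_vec_on I B v))"
        by (rule ip_mv_sym[OF fin sym])
      finally show ?thesis using "1" \<open>j = Suc j1\<close> \<open>j1 = Suc j2\<close> by simp
    qed
  qed
qed

lemma nr_col_idm: "finite I \<Longrightarrow> l \<in> I \<Longrightarrow> nr I (\<lambda>i. idm i l) = 1"
  unfolding nr_def ip_def idm_def by (simp add: if_distrib sum.delta' cong: if_cong)

lemma mpow_col_bound:
  assumes fin: "finite I" and sym: "symm I B" and bpos: "0 < \<beta>"
    and nn: "\<And>v. 0 \<le> ip I v (mat_vec_on I B v)"
    and up: "\<And>v. ip I v (mat_vec_on I B v) \<le> \<beta> * nr I v"
    and l: "l \<in> I"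
  shows "nr I (\<lambda>i. mpow I B j i l) \<le> (\<beta>\<^sup>2) ^ j"
proof (induction j)
  case 0
  then show ?case using nr_col_idm[OF fin l] by simp
next
  case (Suc j)
  have "(\<lambda>i. mpow I B (Suc j) i l) = mat_vec_on I B (\<lambda>i. mpow I B j i l)"
    by (rule ext) (simp add: mat_mult_on_def mat_vec_on_def)
  then have "nr I (\<lambda>i. mpow I B (Suc j) i l) \<le> \<beta>\<^sup>2 * nr I (\<lambda>i. mpow I B j i l)"
    using polar[OF fin sym bpos nn up] by simp
  also have "\<dots> \<le> \<beta>\<^sup>2 * (\<beta>\<^sup>2) ^ j"
    using Suc by (intro mult_left_mono) auto
  finally show ?case by simp
qed

lemma sq_le_nr: "finite I \<Longrightarrow> i \<in> I \<Longrightarrow> (v i)\<^sup>2 \<le> nr I v"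
  unfolding nr_def ip_def power2_eq_square
  by (rule member_le_sum) auto

lemma mpow_entry_bound:
  assumes fin: "finite I" and sym: "symm I B" and bpos: "0 < \<beta>"
    and nn: "\<And>v. 0 \<le> ip I v (mat_vec_on I B v)"
    and up: "\<And>v. ip I v (mat_vec_on I B v) \<le> \<beta> * nr I v"
    and i: "i \<in> I" and l: "l \<in> I"
  shows "\<bar>mpow I B j i l\<bar> \<le> \<beta> ^ j"
proof -
  have "(mpow I B j i l)\<^sup>2 \<le> (\<beta> ^ j)\<^sup>2"
    using sq_le_nr[OF fin i, of "\<lambda>i. mpow I B j i l"] mpow_col_bound[OF assms(1-5) l, of j]
    by (simp add: power_mult_distrib power_even_eq[symmetric] power_mult[symmetric] mult.commute)
  then show ?thesis using abs_le_square_iff[of "mpow I B j i l" "\<beta>^j"] bpos by simp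
qed

lemma mpow_commute:
  assumes fin: "finite I" and c: "\<And>i m. i \<in> I \<Longrightarrow> m \<in> I \<Longrightarrow> mat_mult_on I N B i m = mat_mult_on I B N i m"
    and i: "i \<in> I" and m: "m \<in> I"
  shows "mat_mult_on I N (mpow I B j) i m = mat_mult_on I (mpow I B j) N i m"
  using i m
proof (induction j arbitrary: i m)
  case 0
  then show ?case using mm_idm_left[OF fin] mm_idm_right[OF fin] by simp
next
  case (Suc j)
  have "mat_mult_on I N (mpow I B (Suc j)) i m = mat_mult_on I (mat_mult_on I N B) (mpow I B j) i m"
    by (simp add: mm_assoc)
  also have "\<dots> = mat_mult_on I (mat_mult_on I B N) (mpow I B j) i m"
    by (rule mm_cong) (use c Suc in auto)
  also have "\<dots> = mat_mult_on I B (mat_mult_on I N (mpow I B j)) i m"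
    by (simp add: mm_assoc)
  also have "\<dots> = mat_mult_on I B (mat_mult_on I (mpow I B j) N) i m"
    by (rule mm_cong) (use Suc in auto)
  also have "\<dots> = mat_mult_on I (mpow I B (Suc j)) N i m"
    by (simp add: mm_assoc)
  finally show ?case .
qed

definition cf :: "nat \<Rightarrow> real" where
  "cf j = (-1) ^ j * ((-1/2 :: real) gchoose j)"

lemma cf_0 [simp]: "cf 0 = 1" by (simp add: cf_def)

lemma cf_rec: "cf (Suc j) = cf j * ((real j + 1/2) / (real j + 1))"
proof -
  define G where "G = ((-1/2::real) gchoose j)"
  define G' where "G' = ((-1/2::real) gchoose (Suc j))"
  have h: "(-1/2::real) * G = real j * G + real (Suc j) * G'"
    unfolding G_def G'_def by (rule gbinomial_mult_1)
  have h2: "(real j + 1) * G' = (-1/2 - real j) * G"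
    using h by (auto simp: algebra_simps)
  have "(real j + 1) * cf (Suc j) = - ((-1)^j * ((real j + 1) * G'))"
    by (simp add: cf_def G'_def algebra_simps)
  also have "\<dots> = - ((-1)^j * ((-1/2 - real j) * G))" using h2 by simp
  also have "\<dots> = (real j + 1/2) * cf j" by (simp add: cf_def G_def algebra_simps)
  finally have "(real j + 1) * cf (Suc j) = (real j + 1/2) * cf j" .
  then show ?thesis by (simp add: field_simps)
qed

lemma cf_bounds: "0 \<le> cf j \<and> cf j \<le> 1"
proof (induction j)
  case 0 then show ?case by simp
next
  case (Suc j)
  have q: "0 \<le> (real j + 1/2) / (real j + 1)" "(real j + 1/2) / (real j + 1) \<le> 1"
    by (auto simp: divide_simps)
  have "cf j * ((real j + 1/2) / (real j + 1)) \<le> 1"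
    by (rule mult_le_one) (use Suc q in auto)
  moreover have "0 \<le> cf j * ((real j + 1/2) / (real j + 1))"
    by (rule mult_nonneg_nonneg) (use Suc q in auto)
  ultimately show ?case unfolding cf_rec by auto
qed

lemma cf_nonneg: "0 \<le> cf j" and cf_le1: "cf j \<le> 1"
  using cf_bounds by auto

lemma cf_conv: "(\<Sum>a\<le>j. cf a * cf (j - a)) = 1"
proof -
  have "(\<Sum>a\<le>j. cf a * cf (j - a)) = (\<Sum>a\<in>{0..j}. (-1)^j * (((-1/2::real) gchoose a) * ((-1/2) gchoose (j - a))))"
    unfolding atLeast0AtMost cf_def
    by (intro sum.cong refl) (auto simp: power_add[symmetric])
  also have "\<dots> = (-1)^j * ((-1/2 + -1/2 :: real) gchoose j)"
    by (simp add: sum_distrib_left[symmetric] gbinomial_Vandermonde)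
  also have "(-1/2 + -1/2 :: real) = - 1" by simp
  also have "((-1::real) gchoose j) = (-1)^j"
    using gbinomial_minus[of "1::real" j] binomial_gbinomial[of j j] by simp
  finally show ?thesis by (simp add: power_mult_distrib[symmetric])
qed

lemma sum_suminf_left:
  fixes f :: "nat \<Rightarrow> nat \<Rightarrow> real" and a :: "nat \<Rightarrow> real"
  assumes "\<And>l. l \<in> I \<Longrightarrow> summable (f l)"
  shows "(\<Sum>l\<in>I. a l * suminf (f l)) = (\<Sum>j. \<Sum>l\<in>I. a l * f l j)"
proof -
  have e: "a l * suminf (f l) = (\<Sum>j. a l * f l j)" if "l \<in> I" for l
    using suminf_mult[OF assms[OF that], of "a l"] by simp
  have "(\<Sum>l\<in>I. a l * suminf (f l)) = (\<Sum>l\<in>I. \<Sum>j. a l * f l j)"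
    using e by (intro sum.cong refl) auto
  also have "\<dots> = (\<Sum>j. \<Sum>l\<in>I. a l * f l j)"
    using assms by (intro suminf_sum[symmetric] summable_mult) auto
  finally show ?thesis .
qed

lemma sum_suminf_right:
  fixes f :: "nat \<Rightarrow> nat \<Rightarrow> real" and a :: "nat \<Rightarrow> real"
  assumes "\<And>l. l \<in> I \<Longrightarrow> summable (f l)"
  shows "(\<Sum>l\<in>I. suminf (f l) * a l) = (\<Sum>j. \<Sum>l\<in>I. f l j * a l)"
proof -
  have "(\<Sum>l\<in>I. suminf (f l) * a l) = (\<Sum>l\<in>I. a l * suminf (f l))" by (simp add: mult.commute)
  also have "\<dots> = (\<Sum>j. \<Sum>l\<in>I. a l * f l j)" by (rule sum_suminf_left[OF assms])
  also have "\<dots> = (\<Sum>j. \<Sum>l\<in>I. f l j * a l)" by (simp add: mult.commute)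
  finally show ?thesis .
qed

locale bctx =
  fixes I :: "nat set" and B :: "nat \<Rightarrow> nat \<Rightarrow> real" and \<beta> :: real
  assumes fin: "finite I" and sym: "symm I B" and bpos: "0 < \<beta>" and blt: "\<beta> < 1"
    and nn: "\<And>v. 0 \<le> ip I v (mat_vec_on I B v)"
    and up: "\<And>v. ip I v (mat_vec_on I B v) \<le> \<beta> * nr I v"
begin

lemma ent: "i \<in> I \<Longrightarrow> l \<in> I \<Longrightarrow> \<bar>mpow I B j i l\<bar> \<le> \<beta> ^ j"
  by (rule mpow_entry_bound[OF fin sym bpos nn up])

lemma geo: "summable (\<lambda>j. \<beta> ^ j)"
  using bpos blt by (intro summable_geometric) auto

lemma summ_abs:
  assumes i: "i \<in> I" and l: "l \<in> I"
  shows "summable (\<lambda>j. \<bar>cf j * mpow I B j i l\<bar>)"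
proof (rule summable_comparison_test'[OF geo])
  fix j :: nat
  have "\<bar>cf j * mpow I B j i l\<bar> = cf j * \<bar>mpow I B j i l\<bar>"
    using cf_nonneg[of j] by (simp add: abs_mult)
  also have "\<dots> \<le> 1 * \<beta> ^ j"
    by (rule mult_mono) (use ent[OF i l, of j] cf_nonneg[of j] cf_le1[of j] in auto)
  finally show "norm \<bar>cf j * mpow I B j i l\<bar> \<le> \<beta> ^ j" by simp
qed

lemma summ: "i \<in> I \<Longrightarrow> l \<in> I \<Longrightarrow> summable (\<lambda>j. cf j * mpow I B j i l)"
  by (rule summable_rabs_cancel, rule summ_abs)

lemma summP_abs:
  assumes i: "i \<in> I" and l: "l \<in> I"
  shows "summable (\<lambda>j. \<bar>mpow I B j i l\<bar>)"
proof (rule summable_comparison_test'[OF geo])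
  fix j :: nat
  show "norm \<bar>mpow I B j i l\<bar> \<le> \<beta> ^ j" using ent[OF i l, of j] by simp
qed

lemma summP: "i \<in> I \<Longrightarrow> l \<in> I \<Longrightarrow> summable (\<lambda>j. mpow I B j i l)"
  by (rule summable_rabs_cancel, rule summP_abs)

lemma Ptend: "i \<in> I \<Longrightarrow> l \<in> I \<Longrightarrow> (\<lambda>j. mpow I B j i l) \<longlonglongrightarrow> 0"
  by (rule summable_LIMSEQ_zero, rule summP)

definition S :: "nat \<Rightarrow> nat \<Rightarrow> real" where
  "S i l = (\<Sum>j. cf j * mpow I B j i l)"

lemma S_symm: "symm I S"
  unfolding symm_def S_def using mpow_sym[OF fin sym] by simp

lemma summ_mv: "i \<in> I \<Longrightarrow> summable (\<lambda>j. cf j * mat_vec_on I (mpow I B j) v i)"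
proof -
  assume i: "i \<in> I"
  have "summable (\<lambda>j. \<Sum>l\<in>I. cf j * mpow I B j i l * v l)"
    using summ[OF i] by (intro summable_sum summable_mult2) auto
  then show ?thesis by (simp add: mat_vec_on_def sum_distrib_left mult.assoc)
qed

lemma mv_S: "i \<in> I \<Longrightarrow> mat_vec_on I S v i = (\<Sum>j. cf j * mat_vec_on I (mpow I B j) v i)"
proof -
  assume i: "i \<in> I"
  have "mat_vec_on I S v i = (\<Sum>l\<in>I. (\<Sum>j. cf j * mpow I B j i l) * v l)"
    by (simp add: mat_vec_on_def S_def)
  also have "\<dots> = (\<Sum>j. \<Sum>l\<in>I. cf j * mpow I B j i l * v l)"
    by (rule sum_suminf_right) (use summ i in auto)
  also have "\<dots> = (\<Sum>j. cf j * mat_vec_on I (mpow I B j) v i)"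
    by (simp add: mat_vec_on_def sum_distrib_left mult.assoc)
  finally show ?thesis .
qed

lemma summ_ip: "summable (\<lambda>j. cf j * ip I v (mat_vec_on I (mpow I B j) v))"
proof -
  have "summable (\<lambda>j. \<Sum>i\<in>I. v i * (cf j * mat_vec_on I (mpow I B j) v i))"
    using summ_mv by (intro summable_sum summable_mult) auto
  then show ?thesis by (simp add: ip_def sum_distrib_left mult.left_commute)
qed

lemma ip_S: "ip I v (mat_vec_on I S v) = (\<Sum>j. cf j * ip I v (mat_vec_on I (mpow I B j) v))"
proof -
  have "ip I v (mat_vec_on I S v) = (\<Sum>i\<in>I. v i * (\<Sum>j. cf j * mat_vec_on I (mpow I B j) v i))"
    unfolding ip_def by (intro sum.cong refl) (simp add: mv_S)
  also have "\<dots> = (\<Sum>j. \<Sum>i\<in>I. v i * (cf j * mat_vec_on I (mpow I B j) v i))"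
    by (rule sum_suminf_left) (use summ_mv in auto)
  also have "\<dots> = (\<Sum>j. cf j * ip I v (mat_vec_on I (mpow I B j) v))"
    by (simp add: ip_def sum_distrib_left mult.left_commute)
  finally show ?thesis .
qed

lemma S_pd: "nr I v \<le> ip I v (mat_vec_on I S v)"
proof -
  have "(\<Sum>j\<in>{0}. cf j * ip I v (mat_vec_on I (mpow I B j) v)) \<le> (\<Sum>j. cf j * ip I v (mat_vec_on I (mpow I B j) v))"
    by (rule sum_le_suminf[OF summ_ip]) (auto intro!: mult_nonneg_nonneg cf_nonneg mpow_psd[OF fin sym nn])
  then show ?thesis by (simp add: ip_S ip_mv_idm[OF fin])
qed

lemma S_comm:
  assumes c: "\<And>i m. i \<in> I \<Longrightarrow> m \<in> I \<Longrightarrow> mat_mult_on I N B i m = mat_mult_on I B N i m"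
    and i: "i \<in> I" and m: "m \<in> I"
  shows "mat_mult_on I N S i m = mat_mult_on I S N i m"
proof -
  have "mat_mult_on I N S i m = (\<Sum>l\<in>I. N i l * (\<Sum>j. cf j * mpow I B j l m))"
    by (simp add: mat_mult_on_def S_def)
  also have "\<dots> = (\<Sum>j. \<Sum>l\<in>I. N i l * (cf j * mpow I B j l m))"
    by (rule sum_suminf_left) (use summ m in auto)
  also have "\<dots> = (\<Sum>j. cf j * mat_mult_on I N (mpow I B j) i m)"
    by (simp add: mat_mult_on_def sum_distrib_left mult.left_commute)
  also have "\<dots> = (\<Sum>j. cf j * mat_mult_on I (mpow I B j) N i m)"
    using mpow_commute[OF fin c i m] by simp
  also have "\<dots> = (\<Sum>j. \<Sum>l\<in>I. (cf j * mpow I B j i l) * N l m)"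
    by (simp add: mat_mult_on_def sum_distrib_left mult.assoc)
  also have "\<dots> = (\<Sum>l\<in>I. (\<Sum>j. cf j * mpow I B j i l) * N l m)"
    by (rule sum_suminf_right[symmetric]) (use summ i in auto)
  also have "\<dots> = mat_mult_on I S N i m"
    by (simp add: mat_mult_on_def S_def)
  finally show ?thesis .
qed

lemma SS:
  assumes i: "i \<in> I" and m: "m \<in> I"
  shows "mat_mult_on I S S i m = (\<Sum>j. mpow I B j i m)"
proof -
  have cp: "S i l * S l m = (\<Sum>j. \<Sum>a\<le>j. (cf a * mpow I B a i l) * (cf (j - a) * mpow I B (j - a) l m))"
    if l: "l \<in> I" for l
    unfolding S_def
    by (rule Cauchy_product) (use summ_abs i l m in \<open>auto simp: real_norm_def\<close>)
  have cps: "summable (\<lambda>j. \<Sum>a\<le>j. (cf a * mpow I B a i l) * (cf (j - a) * mpow I B (j - a) l m))"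
    if l: "l \<in> I" for l
    by (rule summable_Cauchy_product) (use summ_abs i l m in \<open>auto simp: real_norm_def\<close>)
  have "mat_mult_on I S S i m = (\<Sum>l\<in>I. \<Sum>j. \<Sum>a\<le>j. (cf a * mpow I B a i l) * (cf (j - a) * mpow I B (j - a) l m))"
    unfolding mat_mult_on_def by (intro sum.cong refl) (simp add: cp)
  also have "\<dots> = (\<Sum>j. \<Sum>l\<in>I. \<Sum>a\<le>j. (cf a * mpow I B a i l) * (cf (j - a) * mpow I B (j - a) l m))"
    by (rule suminf_sum[symmetric]) (use cps in auto)
  also have "\<dots> = (\<Sum>j. mpow I B j i m)"
  proof (rule arg_cong[where f=suminf], rule ext)
    fix j
    have "(\<Sum>l\<in>I. \<Sum>a\<le>j. (cf a * mpow I B a i l) * (cf (j - a) * mpow I B (j - a) l m))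
        = (\<Sum>a\<le>j. \<Sum>l\<in>I. (cf a * cf (j - a)) * (mpow I B a i l * mpow I B (j - a) l m))"
      by (subst sum.swap) (simp add: algebra_simps)
    also have "\<dots> = (\<Sum>a\<le>j. (cf a * cf (j - a)) * mat_mult_on I (mpow I B a) (mpow I B (j - a)) i m)"
      by (simp add: mat_mult_on_def sum_distrib_left)
    also have "\<dots> = (\<Sum>a\<le>j. (cf a * cf (j - a)) * mpow I B j i m)"
      by (intro sum.cong refl) (simp add: mpow_add[OF fin i m])
    also have "\<dots> = mpow I B j i m"
      by (simp add: sum_distrib_right[symmetric] cf_conv)
    finally show "(\<Sum>l\<in>I. \<Sum>a\<le>j. (cf a * mpow I B a i l) * (cf (j - a) * mpow I B (j - a) l m)) = mpow I B j i m" .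
  qed
  finally show ?thesis .
qed

lemma Ntele:
  assumes i: "i \<in> I" and m: "m \<in> I"
  shows "(\<Sum>l\<in>I. (\<Sum>j. mpow I B j i l) * (idm l m - B l m)) = idm i m"
proof -
  have "(\<Sum>l\<in>I. (\<Sum>j. mpow I B j i l) * (idm l m - B l m)) = (\<Sum>j. \<Sum>l\<in>I. mpow I B j i l * (idm l m - B l m))"
    by (rule sum_suminf_right) (use summP i in auto)
  also have "\<dots> = (\<Sum>j. mpow I B j i m - mpow I B (Suc j) i m)"
  proof (rule arg_cong[where f=suminf], rule ext)
    fix j
    have "(\<Sum>l\<in>I. mpow I B j i l * (idm l m - B l m)) = mat_mult_on I (mpow I B j) idm i m - mat_mult_on I (mpow I B j) B i m"
      by (simp add: mat_mult_on_def algebra_simps sum_subtractf)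
    also have "\<dots> = mpow I B j i m - mpow I B (Suc j) i m"
      using mm_idm_right[OF fin m] mpow_Suc'[OF fin i m] by simp
    finally show "(\<Sum>l\<in>I. mpow I B j i l * (idm l m - B l m)) = mpow I B j i m - mpow I B (Suc j) i m" .
  qed
  also have "\<dots> = mpow I B 0 i m - 0"
    by (rule sums_unique[symmetric], rule telescope_sums'[OF Ptend[OF i m]])
  finally show ?thesis by simp
qed

end

lemma mm_transp:
  assumes "symm I A" "symm I C" "i \<in> I" "j \<in> I"
  shows "mat_mult_on I A C i j = mat_mult_on I C A j i"
  unfolding mat_mult_on_def using assms unfolding symm_def
  by (intro sum.cong refl) (auto simp: mult.commute)

lemma mm_symm: "symm I A \<Longrightarrow> symm I (mat_mult_on I A A)"
  unfolding symm_def using mm_transp[of I A A] unfolding symm_def by blast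

lemma nr_pos: "finite I \<Longrightarrow> i \<in> I \<Longrightarrow> v i \<noteq> 0 \<Longrightarrow> 0 < nr I v"
proof -
  assume a: "finite I" "i \<in> I" "v i \<noteq> 0"
  have "0 < (v i)\<^sup>2" using a(3) by simp
  then show ?thesis using sq_le_nr[OF a(1,2), of v] by linarith
qed

lemma abs_prod_le_nr:
  assumes "finite I" "i \<in> I" "j \<in> I"
  shows "\<bar>v i * v j\<bar> \<le> nr I v"
proof -
  have "2 * \<bar>v i * v j\<bar> \<le> (v i)\<^sup>2 + (v j)\<^sup>2"
  proof -
    have "0 \<le> (\<bar>v i\<bar> - \<bar>v j\<bar>)\<^sup>2" by simp
    then have "2 * (\<bar>v i\<bar> * \<bar>v j\<bar>) \<le> \<bar>v i\<bar>\<^sup>2 + \<bar>v j\<bar>\<^sup>2" by (simp add: power2_diff)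
    then show ?thesis by (simp add: abs_mult)
  qed
  then show ?thesis using sq_le_nr[OF assms(1,2), of v] sq_le_nr[OF assms(1,3), of v] by linarith
qed

lemma qf_upper:
  assumes fin: "finite I"
  shows "ip I v (mat_vec_on I Q v) \<le> (\<Sum>i\<in>I. \<Sum>j\<in>I. \<bar>Q i j\<bar>) * nr I v"
proof -
  have "ip I v (mat_vec_on I Q v) = (\<Sum>i\<in>I. \<Sum>j\<in>I. Q i j * (v i * v j))"
    unfolding qf_ip[symmetric] by (simp add: algebra_simps)
  also have "\<dots> \<le> (\<Sum>i\<in>I. \<Sum>j\<in>I. \<bar>Q i j\<bar> * nr I v)"
  proof (intro sum_mono)
    fix i j assume ij: "i \<in> I" "j \<in> I"
    have "Q i j * (v i * v j) \<le> \<bar>Q i j\<bar> * \<bar>v i * v j\<bar>"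
      by (metis abs_ge_self abs_mult)
    also have "\<dots> \<le> \<bar>Q i j\<bar> * nr I v"
      by (rule mult_left_mono[OF abs_prod_le_nr[OF fin ij]]) simp
    finally show "Q i j * (v i * v j) \<le> \<bar>Q i j\<bar> * nr I v" .
  qed
  also have "\<dots> = (\<Sum>i\<in>I. \<Sum>j\<in>I. \<bar>Q i j\<bar>) * nr I v"
    by (simp add: sum_distrib_right)
  finally show ?thesis .
qed

lemma inv_sqrt_props:
  assumes fin: "finite I" and ne: "I \<noteq> {}" and symQ: "symm I Q" and mu: "0 < \<mu>"
    and lb: "\<And>v. \<mu> * nr I v \<le> ip I v (mat_vec_on I Q v)"
  shows "symm I (inv_sqrt_on I Q)
     \<and> (\<forall>i\<in>I. \<forall>j\<in>I. mat_mult_on I (mat_mult_on I (inv_sqrt_on I Q) (inv_sqrt_on I Q)) Q i j = idm i j)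
     \<and> (\<forall>i\<in>I. \<forall>j\<in>I. mat_mult_on I (inv_sqrt_on I Q) Q i j = mat_mult_on I Q (inv_sqrt_on I Q) i j)"
proof -
  define sQ where "sQ = (\<Sum>i\<in>I. \<Sum>j\<in>I. \<bar>Q i j\<bar>)"
  define s where "s = 2 + sQ"
  have sQ0: "0 \<le> sQ" unfolding sQ_def by (intro sum_nonneg) auto
  have spos: "0 < s" using sQ0 unfolding s_def by simp
  obtain i0 where i0: "i0 \<in> I" using ne by auto
  have "\<mu> * nr I (\<lambda>i. idm i i0) \<le> sQ * nr I (\<lambda>i. idm i i0)"
    using lb[of "\<lambda>i. idm i i0"] qf_upper[OF fin, of "\<lambda>i. idm i i0" Q] unfolding sQ_def by linarith
  then have musQ: "\<mu> \<le> sQ" using nr_col_idm[OF fin i0] by simp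
  define \<beta> where "\<beta> = 1 - \<mu> / s"
  have bpos: "0 < \<beta>" unfolding \<beta>_def using musQ spos s_def by (simp add: field_simps)
  have blt: "\<beta> < 1" unfolding \<beta>_def using mu spos by simp
  define B where "B = (\<lambda>i j. idm i j - Q i j / s)"
  have QB: "Q i j = s * (idm i j - B i j)" for i j unfolding B_def using spos by simp
  have symB: "symm I B" using symQ unfolding symm_def B_def idm_def by auto
  have mvB: "mat_vec_on I B v i = v i - mat_vec_on I Q v i / s" if "i \<in> I" for v i
  proof -
    have "mat_vec_on I B v i = mat_vec_on I idm v i - (\<Sum>j\<in>I. Q i j * v j) / s"
      unfolding B_def mat_vec_on_def by (simp add: left_diff_distrib sum_subtractf sum_divide_distrib)
    then show ?thesis using mv_idm[OF fin that] by (simp add: mat_vec_on_def)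
  qed
  have ipB: "ip I v (mat_vec_on I B v) = nr I v - ip I v (mat_vec_on I Q v) / s" for v
  proof -
    have "ip I v (mat_vec_on I B v) = (\<Sum>i\<in>I. v i * v i - v i * mat_vec_on I Q v i / s)"
      unfolding ip_def by (intro sum.cong refl) (simp add: mvB algebra_simps)
    then show ?thesis unfolding nr_def ip_def by (simp add: sum_subtractf sum_divide_distrib)
  qed
  have nnB: "0 \<le> ip I v (mat_vec_on I B v)" for v
  proof -
    have "ip I v (mat_vec_on I Q v) \<le> sQ * nr I v" using qf_upper[OF fin] unfolding sQ_def .
    also have "\<dots> \<le> s * nr I v" unfolding s_def by (intro mult_right_mono nr_nonneg) auto
    finally have "ip I v (mat_vec_on I Q v) / s \<le> nr I v" using spos by (simp add: divide_simps mult.commute)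
    then show ?thesis unfolding ipB by simp
  qed
  have upB: "ip I v (mat_vec_on I B v) \<le> \<beta> * nr I v" for v
  proof -
    have "\<mu> * nr I v / s \<le> ip I v (mat_vec_on I Q v) / s"
      using lb[of v] spos by (simp add: divide_right_mono)
    then show ?thesis unfolding ipB \<beta>_def by (simp add: algebra_simps)
  qed
  interpret bc: bctx I B \<beta>
    by unfold_locales (fact fin symB bpos blt nnB upB)+
  define M0 where "M0 = (\<lambda>i j. if i \<in> I \<and> j \<in> I then bc.S i j / sqrt s else 0)"
  have sqs: "sqrt s * sqrt s = s" using spos by simp
  have sqpos: "0 < sqrt s" using spos by simp
  have M0M0: "mat_mult_on I M0 M0 i l = (\<Sum>j. mpow I B j i l) / s" if "i \<in> I" "l \<in> I" for i l
  proof -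
    have "mat_mult_on I M0 M0 i l = mat_mult_on I bc.S bc.S i l / s"
      unfolding mat_mult_on_def M0_def using that sqs
      by (simp add: sum_divide_distrib)
    then show ?thesis using bc.SS[OF that] by simp
  qed
  have M0sq: "mat_mult_on I (mat_mult_on I M0 M0) Q i m = idm i m" if i: "i \<in> I" and m: "m \<in> I" for i m
  proof -
    have "mat_mult_on I (mat_mult_on I M0 M0) Q i m = (\<Sum>l\<in>I. ((\<Sum>j. mpow I B j i l) / s) * (s * (idm l m - B l m)))"
      unfolding mat_mult_on_def[of I "mat_mult_on I M0 M0"] using M0M0[OF i] QB by (intro sum.cong refl) auto
    also have "\<dots> = (\<Sum>l\<in>I. (\<Sum>j. mpow I B j i l) * (idm l m - B l m))"
      using spos by (intro sum.cong refl) simp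
    also have "\<dots> = idm i m" by (rule bc.Ntele[OF i m])
    finally show ?thesis .
  qed
  have symM0: "symm I M0" using bc.S_symm unfolding symm_def M0_def by simp
  have mvM0: "mat_vec_on I M0 v i = mat_vec_on I bc.S v i / sqrt s" if "i \<in> I" for v i
    unfolding mat_vec_on_def M0_def using that by (simp add: sum_divide_distrib)
  have ipM0: "nr I v / sqrt s \<le> ip I v (mat_vec_on I M0 v)" for v
  proof -
    have "ip I v (mat_vec_on I M0 v) = ip I v (mat_vec_on I bc.S v) / sqrt s"
      unfolding ip_def by (simp add: mvM0 sum_divide_distrib)
    then show ?thesis using bc.S_pd[of v] sqpos by (simp add: divide_right_mono)
  qed
  have pdM0: "pos_def_on I M0"
    unfolding pos_def_on_def
  proof (intro conjI allI impI)
    show "\<forall>i\<in>I. \<forall>j\<in>I. M0 i j = M0 j i" using symM0 unfolding symm_def .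
    fix v :: "nat \<Rightarrow> real" assume "\<exists>i\<in>I. v i \<noteq> 0"
    then have "0 < nr I v" using nr_pos[OF fin] by blast
    then have "0 < nr I v / sqrt s" using sqpos by simp
    then show "0 < (\<Sum>i\<in>I. \<Sum>j\<in>I. v i * M0 i j * v j)" unfolding qf_ip using ipM0[of v] by linarith
  qed
  have commB: "mat_mult_on I N B i m = mat_mult_on I B N i m"
    if c: "\<And>i m. i \<in> I \<Longrightarrow> m \<in> I \<Longrightarrow> mat_mult_on I N Q i m = mat_mult_on I Q N i m"
      and i: "i \<in> I" and m: "m \<in> I" for N i m
  proof -
    have "mat_mult_on I N B i m = mat_mult_on I N idm i m - mat_mult_on I N Q i m / s"
      unfolding mat_mult_on_def B_def by (simp add: algebra_simps sum_subtractf sum_divide_distrib)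
    also have "\<dots> = N i m - mat_mult_on I Q N i m / s" using mm_idm_right[OF fin m] c[OF i m] by simp
    also have "\<dots> = mat_mult_on I idm N i m - mat_mult_on I Q N i m / s" using mm_idm_left[OF fin i] by simp
    also have "\<dots> = mat_mult_on I B N i m"
      unfolding mat_mult_on_def B_def by (simp add: algebra_simps sum_subtractf sum_divide_distrib)
    finally show ?thesis .
  qed
  have commM0: "mat_mult_on I N M0 i m = mat_mult_on I M0 N i m"
    if c: "\<And>i m. i \<in> I \<Longrightarrow> m \<in> I \<Longrightarrow> mat_mult_on I N Q i m = mat_mult_on I Q N i m"
      and i: "i \<in> I" and m: "m \<in> I" for N i m
  proof -
    have "mat_mult_on I N M0 i m = mat_mult_on I N bc.S i m / sqrt s"
      unfolding mat_mult_on_def M0_def using m by (simp add: sum_divide_distrib)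
    also have "\<dots> = mat_mult_on I bc.S N i m / sqrt s"
      using bc.S_comm[OF commB[OF c] i m] by simp
    also have "\<dots> = mat_mult_on I M0 N i m"
      unfolding mat_mult_on_def M0_def using i by (simp add: sum_divide_distrib)
    finally show ?thesis .
  qed
  have M0Q: "mat_mult_on I M0 Q i m = mat_mult_on I Q M0 i m" if "i \<in> I" "m \<in> I" for i m
    using commM0[of Q, OF _ that] by simp
  define Pr where "Pr = (\<lambda>M. (\<forall>i j. (i \<notin> I \<or> j \<notin> I) \<longrightarrow> M i j = 0) \<and> pos_def_on I M \<and>
      (\<forall>i\<in>I. \<forall>j\<in>I. mat_mult_on I (mat_mult_on I M M) Q i j = (if i = j then 1 else 0)))"
  have PrM0: "Pr M0" unfolding Pr_def
  proof (intro conjI)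
    show "\<forall>i j. (i \<notin> I \<or> j \<notin> I) \<longrightarrow> M0 i j = 0" unfolding M0_def by auto
    show "pos_def_on I M0" by (fact pdM0)
    show "\<forall>i\<in>I. \<forall>j\<in>I. mat_mult_on I (mat_mult_on I M0 M0) Q i j = (if i = j then 1 else 0)"
      using M0sq unfolding idm_def by blast
  qed
  have uniq: "M' = M0" if PM': "Pr M'" for M'
  proof -
    have zero': "\<And>i j. (i \<notin> I \<or> j \<notin> I) \<Longrightarrow> M' i j = 0" and pd': "pos_def_on I M'"
      and sq': "\<And>i j. i \<in> I \<Longrightarrow> j \<in> I \<Longrightarrow> mat_mult_on I (mat_mult_on I M' M') Q i j = idm i j"
      using PM' unfolding Pr_def idm_def by auto
    have sym': "symm I M'" using pd' unfolding pos_def_on_def symm_def by auto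
    define X where "X = mat_mult_on I M' M'"
    have symX: "symm I X" unfolding X_def by (rule mm_symm[OF sym'])
    have XQ: "mat_mult_on I X Q i j = idm i j" if "i \<in> I" "j \<in> I" for i j
      using sq'[OF that] unfolding X_def .
    have QX: "mat_mult_on I Q X i j = idm i j" if "i \<in> I" "j \<in> I" for i j
      using mm_transp[OF symQ symX that] XQ[OF that(2,1)] by (simp add: idm_def eq_commute)
    have M'Q: "mat_mult_on I Q M' i m = mat_mult_on I M' Q i m" if i: "i \<in> I" and m: "m \<in> I" for i m
    proof -
      define Y where "Y = mat_mult_on I Q M'"
      have "Y i m = mat_mult_on I Y idm i m" using mm_idm_right[OF fin m] by simp
      also have "\<dots> = mat_mult_on I Y (mat_mult_on I X Q) i m"
        by (rule mm_cong) (use XQ m in auto)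
      also have "\<dots> = mat_mult_on I (mat_mult_on I Y X) Q i m" by (simp add: mm_assoc)
      also have "\<dots> = mat_mult_on I (mat_mult_on I (mat_mult_on I Q X) M') Q i m"
      proof (rule mm_cong)
        fix l assume l: "l \<in> I"
        have "mat_mult_on I Y X i l = mat_mult_on I Q (mat_mult_on I M' (mat_mult_on I M' M')) i l"
          unfolding Y_def X_def by (simp add: mm_assoc)
        also have "\<dots> = mat_mult_on I Q (mat_mult_on I (mat_mult_on I M' M') M') i l"
          by (rule mm_cong) (simp_all add: mm_assoc)
        also have "\<dots> = mat_mult_on I (mat_mult_on I Q X) M' i l"
          unfolding X_def by (simp add: mm_assoc)
        finally show "mat_mult_on I Y X i l = mat_mult_on I (mat_mult_on I Q X) M' i l" .
      qed simp
      also have "\<dots> = mat_mult_on I (mat_mult_on I idm M') Q i m"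
      proof (rule mm_cong)
        fix l assume l: "l \<in> I"
        show "mat_mult_on I (mat_mult_on I Q X) M' i l = mat_mult_on I idm M' i l"
          by (rule mm_cong) (use QX i in auto)
      qed simp
      also have "\<dots> = mat_mult_on I M' Q i m"
        by (rule mm_cong) (use mm_idm_left[OF fin i] in auto)
      finally show ?thesis unfolding Y_def .
    qed
    have cM: "mat_mult_on I M' M0 i m = mat_mult_on I M0 M' i m" if "i \<in> I" "m \<in> I" for i m
      by (rule commM0[OF _ that]) (use M'Q in auto)
    have M0M0X: "mat_mult_on I M0 M0 i m = X i m" if i: "i \<in> I" and m: "m \<in> I" for i m
    proof -
      have "mat_mult_on I M0 M0 i m = mat_mult_on I (mat_mult_on I M0 M0) idm i m"
        using mm_idm_right[OF fin m] by simp
      also have "\<dots> = mat_mult_on I (mat_mult_on I M0 M0) (mat_mult_on I Q X) i m"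
        by (rule mm_cong) (use QX m in auto)
      also have "\<dots> = mat_mult_on I (mat_mult_on I (mat_mult_on I M0 M0) Q) X i m"
        by (simp add: mm_assoc)
      also have "\<dots> = mat_mult_on I idm X i m"
        by (rule mm_cong) (use M0sq i in auto)
      also have "\<dots> = X i m" using mm_idm_left[OF fin i] by simp
      finally show ?thesis .
    qed
    have eqI: "M0 l m = M' l m" if l: "l \<in> I" and m: "m \<in> I" for l m
    proof (rule ccontr)
      assume ne: "M0 l m \<noteq> M' l m"
      define w where "w = (\<lambda>p. M0 p m - M' p m)"
      have "\<exists>i\<in>I. w i \<noteq> 0" using ne l unfolding w_def by auto
      then have p1: "0 < (\<Sum>i\<in>I. \<Sum>j\<in>I. w i * M0 i j * w j)" and p2: "0 < (\<Sum>i\<in>I. \<Sum>j\<in>I. w i * M' i j * w j)"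
        using pdM0 pd' unfolding pos_def_on_def by auto
      have zero: "mat_vec_on I (\<lambda>i j. M0 i j + M' i j) w i = 0" if i: "i \<in> I" for i
      proof -
        have "mat_vec_on I (\<lambda>i j. M0 i j + M' i j) w i =
            mat_mult_on I M0 M0 i m - mat_mult_on I M0 M' i m + mat_mult_on I M' M0 i m - mat_mult_on I M' M' i m"
          unfolding mat_vec_on_def mat_mult_on_def w_def
          by (simp add: algebra_simps sum.distrib sum_subtractf)
        also have "\<dots> = 0" using cM[OF i m] M0M0X[OF i m] unfolding X_def by simp
        finally show ?thesis .
      qed
      have "(\<Sum>i\<in>I. \<Sum>j\<in>I. w i * M0 i j * w j) + (\<Sum>i\<in>I. \<Sum>j\<in>I. w i * M' i j * w j)
          = (\<Sum>i\<in>I. \<Sum>j\<in>I. w i * (M0 i j + M' i j) * w j)"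
        by (simp add: algebra_simps sum.distrib)
      also have "\<dots> = ip I w (mat_vec_on I (\<lambda>i j. M0 i j + M' i j) w)" by (rule qf_ip)
      also have "\<dots> = 0" unfolding ip_def using zero by simp
      finally show False using p1 p2 by linarith
    qed
    show "M' = M0"
    proof (intro ext)
      fix i j show "M' i j = M0 i j"
        using eqI[of i j] zero'[of i j] unfolding M0_def by auto
    qed
  qed
  have "(THE M. Pr M) = M0" by (rule the_equality[where P=Pr, OF PrM0 uniq])
  then have Meq: "inv_sqrt_on I Q = M0" unfolding inv_sqrt_on_def Pr_def .
  show ?thesis unfolding Meq
  proof (intro conjI ballI)
    show "symm I M0" by (fact symM0)
    fix i j assume "i \<in> I" "j \<in> I"
    then show "mat_mult_on I (mat_mult_on I M0 M0) Q i j = idm i j"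
      and "mat_mult_on I M0 Q i j = mat_mult_on I Q M0 i j" using M0sq M0Q by auto
  qed
qed

lemma inv_sqrt_more:
  assumes fin: "finite I" and ne: "I \<noteq> {}" and symQ: "symm I Q" and mu: "0 < \<mu>"
    and lb: "\<And>v. \<mu> * nr I v \<le> ip I v (mat_vec_on I Q v)"
  shows "symm I (inv_sqrt_on I Q)"
    and "\<And>i j. i \<in> I \<Longrightarrow> j \<in> I \<Longrightarrow> mat_mult_on I (mat_mult_on I (inv_sqrt_on I Q) Q) (inv_sqrt_on I Q) i j = idm i j"
    and "\<And>g. nr I (mat_vec_on I (inv_sqrt_on I Q) g) \<le> nr I g / \<mu>"
proof -
  define M where "M = inv_sqrt_on I Q"
  have P: "symm I M" "\<And>i j. i \<in> I \<Longrightarrow> j \<in> I \<Longrightarrow> mat_mult_on I (mat_mult_on I M M) Q i j = idm i j"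
    "\<And>i j. i \<in> I \<Longrightarrow> j \<in> I \<Longrightarrow> mat_mult_on I M Q i j = mat_mult_on I Q M i j"
    using inv_sqrt_props[OF assms] unfolding M_def by auto
  define X where "X = mat_mult_on I M M"
  have symX: "symm I X" unfolding X_def by (rule mm_symm[OF P(1)])
  have QX: "mat_mult_on I Q X i j = idm i j" if "i \<in> I" "j \<in> I" for i j
    using mm_transp[OF symQ symX that] P(2)[OF that(2,1)] unfolding X_def by (simp add: idm_def eq_commute)
  show "symm I (inv_sqrt_on I Q)" using P(1) unfolding M_def .
  show "mat_mult_on I (mat_mult_on I (inv_sqrt_on I Q) Q) (inv_sqrt_on I Q) i j = idm i j"
    if i: "i \<in> I" and j: "j \<in> I" for i j
  proof -
    have "mat_mult_on I (mat_mult_on I M Q) M i j = mat_mult_on I (mat_mult_on I Q M) M i j"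
      by (rule mm_cong) (use P(3) i in auto)
    also have "\<dots> = mat_mult_on I Q X i j" unfolding X_def by (simp add: mm_assoc)
    also have "\<dots> = idm i j" by (rule QX[OF i j])
    finally show ?thesis unfolding M_def .
  qed
  show "nr I (mat_vec_on I (inv_sqrt_on I Q) g) \<le> nr I g / \<mu>" for g
  proof -
    define Pu where "Pu = mat_vec_on I M (mat_vec_on I M g)"
    have PuX: "Pu i = mat_vec_on I X g i" for i unfolding Pu_def X_def by (simp add: mv_mm)
    have QPu: "mat_vec_on I Q Pu i = g i" if i: "i \<in> I" for i
    proof -
      have "mat_vec_on I Q Pu i = mat_vec_on I Q (mat_vec_on I X g) i"
        using PuX by (intro mv_cong) auto
      also have "\<dots> = mat_vec_on I (mat_mult_on I Q X) g i" by (simp add: mv_mm)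
      also have "\<dots> = mat_vec_on I idm g i" by (rule mv_cong) (use QX i in auto)
      also have "\<dots> = g i" by (rule mv_idm[OF fin i])
      finally show ?thesis .
    qed
    define t where "t = ip I Pu g"
    have e1: "nr I (mat_vec_on I M g) = t"
      unfolding nr_def t_def Pu_def using ip_mv_sym[OF fin P(1), of "mat_vec_on I M g" g] by (simp add: ip_comm)
    have e2: "ip I Pu (mat_vec_on I Q Pu) = t" unfolding t_def by (rule ip_cong) (auto simp: QPu)
    have l1: "\<mu> * nr I Pu \<le> t" using lb[of Pu] e2 by simp
    have "0 \<le> nr I (\<lambda>i. \<mu> * Pu i + (-1) * g i)" by (rule nr_nonneg)
    then have l2: "2 * \<mu> * t \<le> \<mu>\<^sup>2 * nr I Pu + nr I g"
      unfolding nr_expand t_def by simp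
    have "\<mu>\<^sup>2 * nr I Pu \<le> \<mu> * t" using mult_left_mono[OF l1, of \<mu>] mu by (simp add: power2_eq_square mult.assoc)
    then have "\<mu> * t \<le> nr I g" using l2 by simp
    then have "t \<le> nr I g / \<mu>" using mu by (simp add: le_divide_eq mult.commute)
    then show ?thesis using e1 unfolding M_def by simp
  qed
qed

lemma sumsq_le_sqsum:
  fixes v :: "nat \<Rightarrow> real"
  assumes "finite I"
  shows "nr I v \<le> (\<Sum>i\<in>I. \<bar>v i\<bar>)\<^sup>2"
proof -
  have "nr I v = (\<Sum>i\<in>I. \<bar>v i\<bar> * \<bar>v i\<bar>)" unfolding nr_def ip_def by (simp add: abs_mult_self_eq)
  also have "\<dots> \<le> (\<Sum>i\<in>I. \<bar>v i\<bar> * (\<Sum>j\<in>I. \<bar>v j\<bar>))"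
    by (intro sum_mono mult_left_mono member_le_sum) (use assms in auto)
  also have "\<dots> = (\<Sum>i\<in>I. \<bar>v i\<bar>)\<^sup>2" by (simp add: sum_distrib_right[symmetric] power2_eq_square)
  finally show ?thesis .
qed

lemma wcs:
  fixes a p :: "nat \<Rightarrow> real"
  assumes fin: "finite W" and pp: "\<And>w. w \<in> W \<Longrightarrow> 0 < p w" and ps: "(\<Sum>w\<in>W. p w) \<le> 1"
  shows "(\<Sum>w\<in>W. \<bar>a w\<bar>)\<^sup>2 \<le> (\<Sum>w\<in>W. (a w)\<^sup>2 / p w)"
proof -
  define Z where "Z = (\<Sum>w\<in>W. \<bar>a w\<bar>)"
  define X where "X = (\<Sum>w\<in>W. (a w)\<^sup>2 / p w)"
  have X0: "0 \<le> X" unfolding X_def using pp by (intro sum_nonneg divide_nonneg_nonneg) (auto intro: less_imp_le)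
  have Z0: "0 \<le> Z" unfolding Z_def by (intro sum_nonneg) auto
  show ?thesis
  proof (cases "Z = 0")
    case True then show ?thesis using X0 unfolding Z_def[symmetric] X_def[symmetric] by simp
  next
    case False
    then have Zp: "0 < Z" using Z0 by simp
    have each: "2 * \<bar>a w\<bar> \<le> (a w)\<^sup>2 / (Z * p w) + Z * p w" if w: "w \<in> W" for w
    proof -
      have zp: "0 < Z * p w" using Zp pp[OF w] by simp
      have "0 \<le> (\<bar>a w\<bar> - Z * p w)\<^sup>2" by simp
      then have h: "2 * \<bar>a w\<bar> * (Z * p w) \<le> (a w)\<^sup>2 + (Z * p w)\<^sup>2"
        by (simp add: power2_diff power2_abs algebra_simps)
      have "2 * \<bar>a w\<bar> = (2 * \<bar>a w\<bar> * (Z * p w)) / (Z * p w)" using zp by (intro nonzero_mult_div_cancel_right[symmetric]) (metis less_irrefl)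
      also have "\<dots> \<le> ((a w)\<^sup>2 + (Z * p w)\<^sup>2) / (Z * p w)"
        by (rule divide_right_mono[OF h]) (use zp in simp)
      also have "\<dots> = (a w)\<^sup>2 / (Z * p w) + Z * p w"
        using zp by (simp add: add_divide_distrib power2_eq_square)
      finally show ?thesis .
    qed
    have "2 * Z = (\<Sum>w\<in>W. 2 * \<bar>a w\<bar>)" unfolding Z_def by (simp add: sum_distrib_left)
    also have "\<dots> \<le> (\<Sum>w\<in>W. (a w)\<^sup>2 / (Z * p w) + Z * p w)"
      using each by (intro sum_mono) auto
    also have "\<dots> = X / Z + Z * (\<Sum>w\<in>W. p w)"
      unfolding X_def by (simp add: sum.distrib sum_distrib_left sum_divide_distrib mult.commute)
    also have "\<dots> \<le> X / Z + Z * 1"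
      using ps Zp by (intro add_left_mono mult_left_mono) auto
    finally have "Z \<le> X / Z" by simp
    then have "Z * Z \<le> X" using Zp by (simp add: le_divide_eq mult.commute)
    then show ?thesis unfolding Z_def[symmetric] X_def[symmetric] by (simp add: power2_eq_square)
  qed
qed

lemma sum_if_restrict:
  fixes f :: "nat \<Rightarrow> real"
  assumes "R \<subseteq> {..<k}"
  shows "(\<Sum>i<k. if i \<in> R then f i else 0) = (\<Sum>i\<in>R. f i)"
proof -
  have "(\<Sum>i<k. if i \<in> R then f i else 0) = (\<Sum>i\<in>{..<k} \<inter> R. f i)"
    by (simp add: sum.inter_restrict)
  also have "{..<k} \<inter> R = R" using assms by auto
  finally show ?thesis .
qed

locale tset =
  fixes D k r :: nat and \<tau> \<kappa> :: real and A :: "nat \<Rightarrow> nat \<Rightarrow> real" and x :: "nat \<Rightarrow> real"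
  assumes tm: "topic_matrix D k A" and sp: "simplex_pt k x" and r1: "1 \<le> r"
    and tpos: "0 < \<tau>" and tle: "\<tau> \<le> 1" and kpos: "0 < \<kappa>"
    and a1: "assm_A1 k r \<tau> x" and a2: "assm_A2 D k r \<kappa> A"
begin

abbreviation R where "R \<equiv> supp_set k x"
abbreviation W where "W \<equiv> {w. w < D \<and> (\<exists>l\<in>R. A w l \<noteq> 0)}"
abbreviation p where "p w \<equiv> row_inner R A w x"
abbreviation Q where "Q \<equiv> fisher D R A x"

lemma Rsub: "R \<subseteq> {..<k}" by (auto simp: supp_set_def)
lemma finR: "finite R" using Rsub finite_subset by blast
lemma cardR: "card R \<le> r" using a1 unfolding assm_A1_def by simp
lemma cardRk: "card R \<le> k" using card_mono[OF _ Rsub] by simp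
lemma xnn: "i < k \<Longrightarrow> 0 \<le> x i" using sp unfolding simplex_pt_def by simp
lemma x0: "i \<notin> R \<Longrightarrow> x i = 0"
  using sp unfolding simplex_pt_def supp_set_def by (cases "i < k") auto
lemma xlb: "j \<in> R \<Longrightarrow> \<tau> / real r \<le> x j" using a1 unfolding assm_A1_def by simp
lemma rpos: "0 < real r" using r1 by simp
lemma xpos: "j \<in> R \<Longrightarrow> 0 < x j"
proof -
  assume j: "j \<in> R"
  have "0 < \<tau> / real r" using tpos rpos by simp
  then show ?thesis using xlb[OF j] by linarith
qed
lemma Ann: "w < D \<Longrightarrow> i < k \<Longrightarrow> 0 \<le> A w i" using tm unfolding topic_matrix_def by simp
lemma colsum: "i < k \<Longrightarrow> (\<Sum>w<D. A w i) = 1" using tm unfolding topic_matrix_def by simp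

lemma sum_k_R: "(\<Sum>i<k. f i * x i) = (\<Sum>i\<in>R. f i * x i)"
  by (rule sum.mono_neutral_right) (use Rsub x0 in auto)

lemma xsumR: "(\<Sum>i\<in>R. x i) = 1"
  using sum_k_R[of "\<lambda>_. 1"] sp unfolding simplex_pt_def by simp

lemma Rne: "R \<noteq> {}" using xsumR by auto

lemma p_def': "p w = (\<Sum>j\<in>R. A w j * x j)" by (simp add: row_inner_def)

lemma p_eq: "(\<Sum>i<k. A w i * x i) = p w" by (simp add: sum_k_R row_inner_def)

lemma pnn: "w < D \<Longrightarrow> 0 \<le> p w"
  unfolding p_def' using Rsub by (intro sum_nonneg mult_nonneg_nonneg Ann xnn) auto

lemma p_lower: "w < D \<Longrightarrow> (\<tau> / real r) * (\<Sum>j\<in>R. A w j) \<le> p w"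
  unfolding p_def' sum_distrib_left
proof (intro sum_mono)
  fix j assume w: "w < D" and j: "j \<in> R"
  have "\<tau> / real r * A w j \<le> x j * A w j"
    by (rule mult_right_mono[OF xlb[OF j] Ann[OF w]]) (use j Rsub in auto)
  then show "\<tau> / real r * A w j \<le> A w j * x j" by (simp add: mult.commute)
qed

lemma pposW: "w \<in> W \<Longrightarrow> 0 < p w"
proof -
  assume w: "w \<in> W"
  then obtain l where l: "l \<in> R" "A w l \<noteq> 0" and wD: "w < D" by auto
  have "0 < A w l" using Ann[OF wD, of l] l Rsub by force
  then have "0 < A w l * x l" using xpos[OF l(1)] by simp
  also have "\<dots> \<le> p w" unfolding p_def'
    by (rule member_le_sum) (use l Rsub wD finR in \<open>auto intro!: mult_nonneg_nonneg Ann xnn\<close>)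
  finally show ?thesis .
qed

lemma Azero: "w \<notin> W \<Longrightarrow> w < D \<Longrightarrow> j \<in> R \<Longrightarrow> A w j = 0" by auto

lemma finW: "finite W" by (rule finite_subset[of _ "{..<D}"]) auto

lemma colW: "j \<in> R \<Longrightarrow> (\<Sum>w\<in>W. A w j) = 1"
proof -
  assume j: "j \<in> R"
  have "(\<Sum>w\<in>W. A w j) = (\<Sum>w<D. A w j)"
    by (rule sum.mono_neutral_left) (use j in auto)
  then show ?thesis using colsum j Rsub by auto
qed

lemma psumW: "(\<Sum>w\<in>W. p w) = 1"
proof -
  have "(\<Sum>w\<in>W. p w) = (\<Sum>w\<in>W. \<Sum>j\<in>R. A w j * x j)" by (simp add: p_def')
  also have "\<dots> = (\<Sum>j\<in>R. (\<Sum>w\<in>W. A w j) * x j)" by (simp add: sum.swap[of _ W] sum_distrib_right)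
  also have "\<dots> = (\<Sum>j\<in>R. x j)" by (intro sum.cong refl) (simp add: colW)
  finally show ?thesis using xsumR by simp
qed

lemma Q_eq: "Q i j = (\<Sum>w\<in>W. A w i * A w j / p w)" by (simp add: fisher_def)

lemma symQ: "symm R Q" unfolding symm_def Q_eq by (simp add: mult.commute)

lemma qfQ: "ip R v (mat_vec_on R Q v) = (\<Sum>w\<in>W. (\<Sum>j\<in>R. A w j * v j)\<^sup>2 / p w)"
proof -
  have "(\<Sum>w\<in>W. (\<Sum>j\<in>R. A w j * v j)\<^sup>2 / p w)
      = (\<Sum>w\<in>W. \<Sum>i\<in>R. \<Sum>j\<in>R. (A w i * v i) * (A w j * v j) / p w)"
    by (simp add: power2_eq_square sum_product sum_divide_distrib)
  also have "\<dots> = (\<Sum>i\<in>R. \<Sum>w\<in>W. \<Sum>j\<in>R. (A w i * v i) * (A w j * v j) / p w)"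
    by (rule sum.swap)
  also have "\<dots> = (\<Sum>i\<in>R. \<Sum>j\<in>R. \<Sum>w\<in>W. (A w i * v i) * (A w j * v j) / p w)"
    by (intro sum.cong refl sum.swap)
  also have "\<dots> = (\<Sum>i\<in>R. \<Sum>j\<in>R. v i * Q i j * v j)"
    unfolding Q_eq by (intro sum.cong refl) (simp add: sum_distrib_left sum_distrib_right algebra_simps)
  also have "\<dots> = ip R v (mat_vec_on R Q v)" by (rule qf_ip)
  finally show ?thesis ..
qed

lemma lbQ: "(1 / \<kappa>\<^sup>2) * nr R v \<le> ip R v (mat_vec_on R Q v)"
proof -
  define a where "a w = (\<Sum>j\<in>R. A w j * v j)" for w
  define v' where "v' i = (if i \<in> R then v i else 0)" for i
  have c1: "\<forall>i\<ge>k. v' i = 0" using Rsub unfolding v'_def by auto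
  have "{i. i < k \<and> v' i \<noteq> 0} \<subseteq> R" unfolding v'_def by auto
  then have c2: "card {i. i < k \<and> v' i \<noteq> 0} \<le> r"
    using card_mono[OF finR] cardR by (meson le_trans)
  have A2: "(\<Sum>i<k. \<bar>v' i\<bar>) / \<kappa> \<le> (\<Sum>w<D. \<bar>\<Sum>i<k. A w i * v' i\<bar>)"
    using a2 c1 c2 unfolding assm_A2_def by blast
  have e1: "(\<Sum>i<k. \<bar>v' i\<bar>) = (\<Sum>i\<in>R. \<bar>v i\<bar>)"
    using sum_if_restrict[OF Rsub, of "\<lambda>i. \<bar>v i\<bar>"] unfolding v'_def by (simp add: if_distrib cong: if_cong)
  have e2: "(\<Sum>i<k. A w i * v' i) = a w" for w
    using sum_if_restrict[OF Rsub, of "\<lambda>i. A w i * v i"] unfolding v'_def a_def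
    by (simp add: if_distrib cong: if_cong)
  have e3: "(\<Sum>w<D. \<bar>a w\<bar>) = (\<Sum>w\<in>W. \<bar>a w\<bar>)"
    by (rule sum.mono_neutral_right) (auto simp: a_def)
  define Z where "Z = (\<Sum>w\<in>W. \<bar>a w\<bar>)"
  define L1 where "L1 = (\<Sum>i\<in>R. \<bar>v i\<bar>)"
  have L10: "0 \<le> L1" unfolding L1_def by (intro sum_nonneg) auto
  have ZL: "L1 / \<kappa> \<le> Z" using A2 unfolding e1 e2 e3 Z_def L1_def .
  have "(L1 / \<kappa>)\<^sup>2 \<le> Z\<^sup>2" using ZL L10 kpos by (intro power_mono) auto
  also have "Z\<^sup>2 \<le> (\<Sum>w\<in>W. (a w)\<^sup>2 / p w)"
    unfolding Z_def by (rule wcs[OF finW pposW]) (use psumW in auto)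
  also have "\<dots> = ip R v (mat_vec_on R Q v)" unfolding qfQ a_def ..
  finally have h: "(L1 / \<kappa>)\<^sup>2 \<le> ip R v (mat_vec_on R Q v)" .
  have "(1 / \<kappa>\<^sup>2) * nr R v \<le> (1 / \<kappa>\<^sup>2) * L1\<^sup>2"
    using sumsq_le_sqsum[OF finR, of v] unfolding L1_def by (intro mult_left_mono) auto
  also have "\<dots> = (L1 / \<kappa>)\<^sup>2" by (simp add: power_divide)
  finally show ?thesis using h by linarith
qed

abbreviation M where "M \<equiv> inv_sqrt_on R Q"

lemma mu_pos: "0 < 1 / \<kappa>\<^sup>2" using kpos by simp

lemma M_symm: "symm R M"
  by (rule inv_sqrt_more(1)[OF finR Rne symQ mu_pos lbQ])
lemma MQM: "i \<in> R \<Longrightarrow> j \<in> R \<Longrightarrow> mat_mult_on R (mat_mult_on R M Q) M i j = idm i j"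
  by (rule inv_sqrt_more(2)[OF finR Rne symQ mu_pos lbQ])
lemma M_bound: "nr R (mat_vec_on R M g) \<le> \<kappa>\<^sup>2 * nr R g"
  using inv_sqrt_more(3)[OF finR Rne symQ mu_pos lbQ, of g] by (simp add: mult.commute)

end

lemma exp_quad:
  fixes z :: real
  assumes "\<bar>z\<bar> \<le> 1"
  shows "exp z \<le> 1 + z + z\<^sup>2"
proof (cases "0 \<le> z")
  case True
  then show ?thesis using exp_bound[of z] assms by simp
next
  case False
  define t where "t = - z"
  have t: "0 < t" "t \<le> 1" using False assms unfolding t_def by auto
  have "0 < t\<^sup>2" using t by simp
  then have q: "0 < 1 - t + t\<^sup>2" using t by linarith
  have "1 \<le> 1 + t ^ 3" using t by simp
  also have "1 + t ^ 3 = (1 - t + t\<^sup>2) * (1 + t)" by (simp add: algebra_simps power2_eq_square power3_eq_cube)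
  also have "\<dots> \<le> (1 - t + t\<^sup>2) * exp t"
    using q by (intro mult_left_mono) auto
  finally have "1 \<le> (1 - t + t\<^sup>2) * exp t" .
  then have "exp (- t) \<le> 1 - t + t\<^sup>2"
    by (simp add: exp_minus field_simps)
  then show ?thesis unfolding t_def by simp
qed

lemma exp_pmf_sum:
  fixes WP :: "nat pmf"
  assumes "finite (set_pmf WP)"
  shows "measure_pmf.expectation WP f = (\<Sum>w\<in>set_pmf WP. f w * pmf WP w)"
  by (rule integral_measure_pmf_real) (use assms in auto)

lemma chernoff_word:
  fixes WP :: "nat pmf" and Y :: "nat \<Rightarrow> real"
  assumes fin: "finite (set_pmf WP)"
    and bd: "\<And>w. w \<in> set_pmf WP \<Longrightarrow> \<bar>Y w\<bar> \<le> L"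
    and m0: "measure_pmf.expectation WP Y = 0"
    and v1: "measure_pmf.expectation WP (\<lambda>w. (Y w)\<^sup>2) \<le> 1"
    and l0: "0 \<le> lam" and lL: "lam * L \<le> 1"
  shows "measure_pmf.expectation WP (\<lambda>w. exp (lam * Y w)) \<le> exp (lam\<^sup>2)"
proof -
  let ?S = "set_pmf WP"
  have "measure_pmf.expectation WP (\<lambda>w. exp (lam * Y w)) = (\<Sum>w\<in>?S. exp (lam * Y w) * pmf WP w)"
    by (rule exp_pmf_sum[OF fin])
  also have "\<dots> \<le> (\<Sum>w\<in>?S. (1 + lam * Y w + lam\<^sup>2 * (Y w)\<^sup>2) * pmf WP w)"
  proof (intro sum_mono mult_right_mono)
    fix w assume w: "w \<in> ?S"
    have "\<bar>lam * Y w\<bar> \<le> lam * L" unfolding abs_mult using bd[OF w] l0 by (simp add: mult_left_mono)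
    then have "exp (lam * Y w) \<le> 1 + lam * Y w + (lam * Y w)\<^sup>2" using lL exp_quad by (meson order_trans)
    then show "exp (lam * Y w) \<le> 1 + lam * Y w + lam\<^sup>2 * (Y w)\<^sup>2" by (simp add: power_mult_distrib)
  qed simp
  also have "\<dots> = (\<Sum>w\<in>?S. pmf WP w) + lam * (\<Sum>w\<in>?S. Y w * pmf WP w) + lam\<^sup>2 * (\<Sum>w\<in>?S. (Y w)\<^sup>2 * pmf WP w)"
    by (simp add: algebra_simps sum.distrib sum_distrib_left)
  also have "(\<Sum>w\<in>?S. pmf WP w) = 1" by (rule sum_pmf_eq_1[OF fin]) simp
  also have "(\<Sum>w\<in>?S. Y w * pmf WP w) = 0" using m0 exp_pmf_sum[OF fin, of Y] by simp
  also have "(\<Sum>w\<in>?S. (Y w)\<^sup>2 * pmf WP w) \<le> 1" using v1 exp_pmf_sum[OF fin, of "\<lambda>w. (Y w)\<^sup>2"] by simp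
  then have "1 + lam * 0 + lam\<^sup>2 * (\<Sum>w\<in>?S. (Y w)\<^sup>2 * pmf WP w) \<le> 1 + lam\<^sup>2"
    using mult_left_mono[of _ 1 "lam\<^sup>2"] by simp
  also have "1 + lam\<^sup>2 \<le> exp (lam\<^sup>2)" by (rule exp_ge_add_one_self)
  finally show ?thesis .
qed

lemma chernoff_doc:
  fixes WP :: "nat pmf" and Y :: "nat \<Rightarrow> real"
  assumes fin: "finite (set_pmf WP)"
    and bd: "\<And>w. w \<in> set_pmf WP \<Longrightarrow> \<bar>Y w\<bar> \<le> L"
    and m0: "measure_pmf.expectation WP Y = 0"
    and v1: "measure_pmf.expectation WP (\<lambda>w. (Y w)\<^sup>2) \<le> 1"
    and l0: "0 \<le> lam" and lL: "lam * L \<le> 1"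
  shows "measure_pmf.prob (Pi_pmf {..<n} 0 (\<lambda>_. WP)) {ws. s \<le> (\<Sum>t<n. Y (ws t))}
           \<le> exp (real n * lam\<^sup>2 - lam * s)"
proof -
  define DP where "DP = Pi_pmf {..<n} 0 (\<lambda>_. WP)"
  define E where "E = {ws. s \<le> (\<Sum>t<n. Y (ws t))}"
  have finDP: "finite (set_pmf DP)"
    unfolding DP_def by (subst set_Pi_pmf) (use fin in auto)
  have ew: "measure_pmf.expectation WP (\<lambda>w. exp (lam * Y w)) \<le> exp (lam\<^sup>2)"
    by (rule chernoff_word[OF assms])
  have ew0: "0 \<le> measure_pmf.expectation WP (\<lambda>w. exp (lam * Y w))"
    by (rule Bochner_Integration.integral_nonneg) simp
  have "measure_pmf.prob DP E = measure_pmf.expectation DP (indicator E)" by simp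
  also have "\<dots> \<le> measure_pmf.expectation DP (\<lambda>ws. exp (- (lam * s)) * (\<Prod>t<n. exp (lam * Y (ws t))))"
  proof (rule integral_mono)
    show "integrable (measure_pmf DP) (indicator E :: _ \<Rightarrow> real)" by (rule integrable_measure_pmf_finite[OF finDP])
    show "integrable (measure_pmf DP) (\<lambda>ws. exp (- (lam * s)) * (\<Prod>t<n. exp (lam * Y (ws t))))"
      by (rule integrable_measure_pmf_finite[OF finDP])
    fix ws
    have eq: "exp (- (lam * s)) * (\<Prod>t<n. exp (lam * Y (ws t))) = exp (lam * (\<Sum>t<n. Y (ws t)) - lam * s)"
    proof -
      have e1: "exp (lam * (\<Sum>t<n. Y (ws t))) = (\<Prod>t<n. exp (lam * Y (ws t)))"
        by (simp add: sum_distrib_left exp_sum)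
      have e2: "exp (a - b) = exp (- b) * exp a" for a b :: real
        by (simp add: exp_diff exp_minus divide_inverse mult.commute)
      show ?thesis unfolding e2 e1 ..
    qed
    show "indicator E ws \<le> exp (- (lam * s)) * (\<Prod>t<n. exp (lam * Y (ws t)))"
    proof (cases "ws \<in> E")
      case True
      then have "lam * s \<le> lam * (\<Sum>t<n. Y (ws t))" unfolding E_def using l0 by (simp add: mult_left_mono)
      then have "1 \<le> exp (lam * (\<Sum>t<n. Y (ws t)) - lam * s)" by simp
      then show ?thesis using True unfolding eq by simp
    next
      case False then show ?thesis unfolding eq by simp
    qed
  qed
  also have "\<dots> = exp (- (lam * s)) * measure_pmf.expectation DP (\<lambda>ws. \<Prod>t\<in>{..<n}. exp (lam * Y (ws t)))"
    by simp
  also have "measure_pmf.expectation DP (\<lambda>ws. \<Prod>t\<in>{..<n}. exp (lam * Y (ws t)))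
      = (\<Prod>t\<in>{..<n}. measure_pmf.expectation WP (\<lambda>w. exp (lam * Y w)))"
    unfolding DP_def
    by (rule expectation_prod_Pi_pmf[where f="\<lambda>_ w. exp (lam * Y w)"]) (auto intro: integrable_measure_pmf_finite[OF fin])
  also have "\<dots> = (measure_pmf.expectation WP (\<lambda>w. exp (lam * Y w))) ^ n" by simp
  also have "exp (- (lam * s)) * \<dots> \<le> exp (- (lam * s)) * (exp (lam\<^sup>2)) ^ n"
    by (intro mult_left_mono power_mono ew ew0) simp
  also have "\<dots> = exp (real n * lam\<^sup>2 - lam * s)"
    by (simp add: exp_of_nat_mult[symmetric] exp_diff exp_minus field_simps)
  finally show ?thesis unfolding DP_def E_def .
qed

context tset
begin

abbreviation WP where "WP \<equiv> word_pmf D k A x"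

lemma p_zero: "w < D \<Longrightarrow> w \<notin> W \<Longrightarrow> p w = 0"
  unfolding p_def' by (intro sum.neutral) auto

lemma psumD: "(\<Sum>w<D. p w) = 1"
proof -
  have "(\<Sum>w<D. p w) = (\<Sum>w\<in>W. p w)"
    by (rule sum.mono_neutral_right) (auto simp: p_zero)
  then show ?thesis using psumW by simp
qed

lemma pmf_WP: "pmf WP w = (if w < D then p w else 0)"
proof -
  define f where "f w = (if w < D then (\<Sum>i<k. A w i * x i) else 0)" for w
  have f_eq: "f w = (if w < D then p w else 0)" for w unfolding f_def p_eq ..
  have nn: "\<And>w. 0 \<le> f w" unfolding f_eq using pnn by auto
  have "(\<integral>\<^sup>+w. ennreal (f w) \<partial>count_space UNIV) = (\<Sum>w\<in>{..<D}. ennreal (f w))"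
    by (rule nn_integral_count_space') (auto simp: f_eq)
  also have "\<dots> = ennreal (\<Sum>w<D. f w)" using nn by simp
  also have "(\<Sum>w<D. f w) = 1" unfolding f_eq using psumD by simp
  finally have pr: "(\<integral>\<^sup>+w. ennreal (f w) \<partial>count_space UNIV) = 1" by simp
  have "pmf (embed_pmf f) w = f w" by (rule pmf_embed_pmf[OF nn pr])
  then show ?thesis unfolding word_pmf_def f_def[symmetric] f_eq .
qed

lemma setWP: "set_pmf WP \<subseteq> W"
proof
  fix w assume "w \<in> set_pmf WP"
  then have "pmf WP w \<noteq> 0" by (simp add: set_pmf_iff)
  then have "w < D" "p w \<noteq> 0" unfolding pmf_WP by (auto split: if_splits)
  then show "w \<in> W" using p_zero by blast
qed

lemma finWP: "finite (set_pmf WP)" using finite_subset[OF setWP finW] .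

lemma EWP: "measure_pmf.expectation WP f = (\<Sum>w\<in>W. f w * p w)"
proof -
  have "measure_pmf.expectation WP f = (\<Sum>w\<in>W. f w * pmf WP w)"
    by (rule integral_measure_pmf_real) (use finW setWP in auto)
  also have "\<dots> = (\<Sum>w\<in>W. f w * p w)" by (intro sum.cong refl) (auto simp: pmf_WP)
  finally show ?thesis .
qed

definition Yv :: "nat \<Rightarrow> nat \<Rightarrow> real" where
  "Yv w i = mat_vec_on R M (\<lambda>j. A w j / p w - 1) i"

lemma EY0: "measure_pmf.expectation WP (\<lambda>w. Yv w i) = 0"
proof -
  have "measure_pmf.expectation WP (\<lambda>w. Yv w i) = (\<Sum>w\<in>W. \<Sum>j\<in>R. M i j * (A w j - p w))"
    unfolding EWP Yv_def mat_vec_on_def sum_distrib_right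
  proof (intro sum.cong refl)
    fix w j assume w: "w \<in> W"
    show "M i j * (A w j / p w - 1) * p w = M i j * (A w j - p w)"
      using pposW[OF w] by (simp add: field_simps)
  qed
  also have "\<dots> = (\<Sum>j\<in>R. \<Sum>w\<in>W. M i j * (A w j - p w))" by (rule sum.swap)
  also have "\<dots> = (\<Sum>j\<in>R. M i j * ((\<Sum>w\<in>W. A w j) - (\<Sum>w\<in>W. p w)))"
    by (intro sum.cong refl) (simp add: sum_distrib_left[symmetric] sum_subtractf)
  also have "\<dots> = 0" using colW psumW by simp
  finally show ?thesis .
qed

lemma EY2:
  assumes i: "i \<in> R"
  shows "measure_pmf.expectation WP (\<lambda>w. (Yv w i)\<^sup>2) \<le> 1"
proof -
  define m where "m = (\<Sum>j\<in>R. M i j)"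
  define z where "z w = (\<Sum>j\<in>R. M i j * A w j) / p w" for w
  have Yz: "Yv w i = z w - m" for w
    unfolding Yv_def mat_vec_on_def z_def m_def by (simp add: right_diff_distrib sum_subtractf sum_divide_distrib)
  have zp: "z w * p w = (\<Sum>j\<in>R. M i j * A w j)" if w: "w \<in> W" for w
    unfolding z_def using pposW[OF w] by simp
  have s1: "(\<Sum>w\<in>W. z w * p w) = m"
  proof -
    have "(\<Sum>w\<in>W. z w * p w) = (\<Sum>w\<in>W. \<Sum>j\<in>R. M i j * A w j)" by (intro sum.cong refl) (simp add: zp)
    also have "\<dots> = (\<Sum>j\<in>R. M i j * (\<Sum>w\<in>W. A w j))" by (subst sum.swap) (simp add: sum_distrib_left)
    also have "\<dots> = m" unfolding m_def by (intro sum.cong refl) (simp add: colW)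
    finally show ?thesis .
  qed
  define u where "u j = M i j" for j
  have s2: "(\<Sum>w\<in>W. (z w)\<^sup>2 * p w) = ip R u (mat_vec_on R Q u)"
  proof -
    have "(\<Sum>w\<in>W. (z w)\<^sup>2 * p w) = (\<Sum>w\<in>W. (\<Sum>j\<in>R. A w j * u j)\<^sup>2 / p w)"
    proof (intro sum.cong refl)
      fix w assume w: "w \<in> W"
      have "(z w)\<^sup>2 * p w = (z w * p w)\<^sup>2 / p w" using pposW[OF w] by (simp add: power2_eq_square)
      also have "\<dots> = (\<Sum>j\<in>R. A w j * u j)\<^sup>2 / p w" using zp[OF w] unfolding u_def by (simp add: mult.commute)
      finally show "(z w)\<^sup>2 * p w = (\<Sum>j\<in>R. A w j * u j)\<^sup>2 / p w" .
    qed
    then show ?thesis using qfQ[of u] by simp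
  qed
  have s3: "ip R u (mat_vec_on R Q u) = 1"
  proof -
    have "ip R u (mat_vec_on R Q u) = (\<Sum>l\<in>R. M i l * (\<Sum>j\<in>R. Q l j * M j i))"
      unfolding ip_def mat_vec_on_def u_def using M_symm i unfolding symm_def
      by (intro sum.cong refl) auto
    also have "\<dots> = mat_mult_on R M (mat_mult_on R Q M) i i" by (simp add: mat_mult_on_def)
    also have "\<dots> = mat_mult_on R (mat_mult_on R M Q) M i i" by (simp add: mm_assoc)
    also have "\<dots> = 1" using MQM[OF i i] by (simp add: idm_def)
    finally show ?thesis .
  qed
  have "measure_pmf.expectation WP (\<lambda>w. (Yv w i)\<^sup>2) = (\<Sum>w\<in>W. (z w - m)\<^sup>2 * p w)" unfolding EWP Yz ..
  also have "\<dots> = (\<Sum>w\<in>W. (z w)\<^sup>2 * p w) - 2 * m * (\<Sum>w\<in>W. z w * p w) + m\<^sup>2 * (\<Sum>w\<in>W. p w)"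
    by (simp add: power2_diff algebra_simps sum.distrib sum_subtractf sum_distrib_left)
  also have "\<dots> = 1 - m\<^sup>2" unfolding s1 s2 s3 psumW by (simp add: power2_eq_square)
  also have "\<dots> \<le> 1" by simp
  finally show ?thesis .
qed

lemma Ybd:
  assumes w: "w \<in> W" and i: "i \<in> R"
  shows "\<bar>Yv w i\<bar> \<le> 2 * \<kappa> * real r / \<tau>"
proof -
  define g where "g j = A w j / p w - 1" for j
  have pw: "0 < p w" by (rule pposW[OF w])
  have wD: "w < D" using w by simp
  have sA: "(\<Sum>j\<in>R. A w j) / p w \<le> real r / \<tau>"
  proof -
    have "(\<tau> / real r) * (\<Sum>j\<in>R. A w j) \<le> p w" by (rule p_lower[OF wD])
    then have "(\<Sum>j\<in>R. A w j) \<le> p w * (real r / \<tau>)"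
      using tpos rpos by (simp add: field_simps)
    then show ?thesis using pw by (simp add: divide_le_eq mult.commute)
  qed
  have "(\<Sum>j\<in>R. \<bar>g j\<bar>) \<le> (\<Sum>j\<in>R. A w j / p w + 1)"
  proof (intro sum_mono)
    fix j assume j: "j \<in> R"
    have "0 \<le> A w j / p w" using Ann[OF wD, of j] j Rsub pw by auto
    then show "\<bar>g j\<bar> \<le> A w j / p w + 1" unfolding g_def by linarith
  qed
  also have "\<dots> = (\<Sum>j\<in>R. A w j) / p w + real (card R)"
    by (simp add: sum.distrib sum_divide_distrib)
  also have "\<dots> \<le> real r / \<tau> + real r / \<tau>"
  proof -
    have "real (card R) \<le> real r" using cardR by simp
    also have "real r \<le> real r / \<tau>" using tpos tle rpos by (simp add: le_divide_eq)
    finally show ?thesis using sA by linarith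
  qed
  finally have gs: "(\<Sum>j\<in>R. \<bar>g j\<bar>) \<le> 2 * real r / \<tau>" by simp
  have gs0: "0 \<le> (\<Sum>j\<in>R. \<bar>g j\<bar>)" by (intro sum_nonneg) auto
  have "(Yv w i)\<^sup>2 \<le> nr R (mat_vec_on R M g)"
    using sq_le_nr[OF finR i, of "mat_vec_on R M g"] unfolding Yv_def g_def .
  also have "\<dots> \<le> \<kappa>\<^sup>2 * nr R g" by (rule M_bound)
  also have "\<dots> \<le> \<kappa>\<^sup>2 * (\<Sum>j\<in>R. \<bar>g j\<bar>)\<^sup>2" by (intro mult_left_mono sumsq_le_sqsum finR) simp
  also have "\<dots> \<le> \<kappa>\<^sup>2 * (2 * real r / \<tau>)\<^sup>2" by (intro mult_left_mono power_mono gs gs0) simp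
  also have "\<dots> = (2 * \<kappa> * real r / \<tau>)\<^sup>2" by (simp add: power_mult_distrib power_divide)
  finally have "(Yv w i)\<^sup>2 \<le> (2 * \<kappa> * real r / \<tau>)\<^sup>2" .
  moreover have "0 \<le> 2 * \<kappa> * real r / \<tau>" using kpos tpos by simp
  ultimately show ?thesis using abs_le_square_iff[of "Yv w i" "2 * \<kappa> * real r / \<tau>"] by simp
qed

lemma tail_pos:
  assumes i: "i \<in> R" and l0: "0 \<le> lam" and lL: "lam * (2 * \<kappa> * real r / \<tau>) \<le> 1"
  shows "measure_pmf.prob (Pi_pmf {..<n} 0 (\<lambda>_. WP)) {ws. s \<le> (\<Sum>t<n. Yv (ws t) i)}
           \<le> exp (real n * lam\<^sup>2 - lam * s)"
proof -
  have bd: "\<And>w. w \<in> set_pmf WP \<Longrightarrow> \<bar>Yv w i\<bar> \<le> 2 * \<kappa> * real r / \<tau>"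
    using Ybd setWP i by blast
  show ?thesis by (rule chernoff_doc[OF finWP bd EY0 EY2[OF i] l0 lL])
qed

lemma tail_neg:
  assumes i: "i \<in> R" and l0: "0 \<le> lam" and lL: "lam * (2 * \<kappa> * real r / \<tau>) \<le> 1"
  shows "measure_pmf.prob (Pi_pmf {..<n} 0 (\<lambda>_. WP)) {ws. s \<le> - (\<Sum>t<n. Yv (ws t) i)}
           \<le> exp (real n * lam\<^sup>2 - lam * s)"
proof -
  have e0: "measure_pmf.expectation WP (\<lambda>w. - Yv w i) = 0" using EY0[of i] by simp
  have e2: "measure_pmf.expectation WP (\<lambda>w. (- Yv w i)\<^sup>2) \<le> 1" using EY2[OF i] by simp
  have "measure_pmf.prob (Pi_pmf {..<n} 0 (\<lambda>_. WP)) {ws. s \<le> (\<Sum>t<n. - Yv (ws t) i)}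
           \<le> exp (real n * lam\<^sup>2 - lam * s)"
  proof (rule chernoff_doc[OF finWP _ e0 e2 l0 lL])
    fix w assume "w \<in> set_pmf WP"
    then have "w \<in> W" using setWP by blast
    then show "\<bar>- Yv w i\<bar> \<le> 2 * \<kappa> * real r / \<tau>" using Ybd i by simp
  qed
  then show ?thesis by (simp add: sum_negf)
qed

lemma wg_decomp: "whitened_grad n D k A x ws i = (\<Sum>t<n. Yv (ws t) i)"
proof -
  have g: "grad_f n R A x ws j - real n = (\<Sum>t<n. A (ws t) j / p (ws t) - 1)" for j
    by (simp add: grad_f_def sum_subtractf)
  have "whitened_grad n D k A x ws i = mat_vec_on R M (\<lambda>j. \<Sum>t<n. A (ws t) j / p (ws t) - 1) i"
    unfolding whitened_grad_def Let_def g ..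
  also have "\<dots> = (\<Sum>t<n. Yv (ws t) i)"
    unfolding mat_vec_on_def Yv_def by (simp add: sum_distrib_left sum.swap[of _ R])
  finally show ?thesis .
qed

end

lemma sqrt_le_self': "1 \<le> (y::real) \<Longrightarrow> sqrt y \<le> y"
proof -
  assume y: "1 \<le> y"
  have "y \<le> y\<^sup>2" using y by (simp add: power2_eq_square)
  then have "sqrt y \<le> sqrt (y\<^sup>2)" by (rule real_sqrt_le_mono)
  then show ?thesis using y by simp
qed

context tset
begin

lemma key:
  assumes k3: "3 \<le> k" and nb: "16 * \<kappa>\<^sup>2 * (real r)\<^sup>2 * ln (real k) / \<tau>\<^sup>2 \<le> real n"
  shows "1 - 2 / real k ^ 3 \<le> measure_pmf.prob (document_pmf n D k A x)
          {ws. l2_on R (whitened_grad n D k A x ws) \<le> 4 * (ln (real k)) ^ 1 * sqrt (real n * real r) \<and>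
               linf_on R (whitened_grad n D k A x ws) \<le> 4 * (ln (real k)) ^ 1 * sqrt (real n)}"
proof -
  define DP where "DP = document_pmf n D k A x"
  have DPeq: "DP = Pi_pmf {..<n} 0 (\<lambda>_. WP)" unfolding DP_def document_pmf_def ..
  define lk where "lk = ln (real k)"
  have kpos': "0 < real k" using k3 by simp
  have lk1: "1 < lk"
  proof -
    have "ln 3 \<le> ln (real k)" using k3 by simp
    then show ?thesis using ln3_gt_1 unfolding lk_def by linarith
  qed
  have num: "0 < 16 * \<kappa>\<^sup>2 * (real r)\<^sup>2 * lk / \<tau>\<^sup>2" using kpos rpos tpos lk1 by simp
  then have npos: "0 < real n" using nb unfolding lk_def by linarith
  define q where "q = sqrt (real n * lk)"
  have q0: "0 \<le> q" unfolding q_def using npos lk1 by simp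
  have qsq: "q\<^sup>2 = real n * lk" unfolding q_def using npos lk1 by simp
  define s where "s = 4 * q"
  define L where "L = 2 * \<kappa> * real r / \<tau>"
  define lam where "lam = s / (2 * real n)"
  have l0: "0 \<le> lam" unfolding lam_def s_def using q0 npos by simp
  have nb2: "16 * \<kappa>\<^sup>2 * (real r)\<^sup>2 * lk \<le> real n * \<tau>\<^sup>2"
    using nb tpos unfolding lk_def by (simp add: divide_le_eq)
  have "(4 * \<kappa> * real r * q)\<^sup>2 = real n * (16 * \<kappa>\<^sup>2 * (real r)\<^sup>2 * lk)"
    by (simp add: power_mult_distrib qsq)
  also have "\<dots> \<le> real n * (real n * \<tau>\<^sup>2)" using nb2 npos by (intro mult_left_mono) auto
  also have "\<dots> = (real n * \<tau>)\<^sup>2" by (simp add: power2_eq_square)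
  finally have "4 * \<kappa> * real r * q \<le> real n * \<tau>"
    by (rule power2_le_imp_le) (use npos tpos in simp)
  then have lL: "lam * L \<le> 1"
    unfolding lam_def L_def s_def using npos tpos by (simp add: field_simps)
  have expo: "real n * lam\<^sup>2 - lam * s = - (4 * lk)"
    unfolding lam_def s_def using npos qsq by (simp add: field_simps power2_eq_square)
  have ek: "exp (- (4 * lk)) = 1 / real k ^ 4"
  proof -
    have "exp (of_nat 4 * lk) = exp lk ^ 4" by (rule exp_of_nat_mult)
    also have "exp lk = real k" unfolding lk_def using kpos' by simp
    finally have "exp (4 * lk) = real k ^ 4" by simp
    then show ?thesis by (simp add: exp_minus inverse_eq_divide)
  qed
  define X where "X ws i = (\<Sum>t<n. Yv (ws t) i)" for ws i
  define bad where "bad = (\<Union>i\<in>R. {ws. s < \<bar>X ws i\<bar>})"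
  have tail: "measure_pmf.prob DP {ws. s < \<bar>X ws i\<bar>} \<le> 2 / real k ^ 4" if i: "i \<in> R" for i
  proof -
    have "measure_pmf.prob DP {ws. s < \<bar>X ws i\<bar>}
        \<le> measure_pmf.prob DP ({ws. s \<le> (\<Sum>t<n. Yv (ws t) i)} \<union> {ws. s \<le> - (\<Sum>t<n. Yv (ws t) i)})"
      by (rule measure_pmf.finite_measure_mono) (auto simp: X_def)
    also have "\<dots> \<le> measure_pmf.prob DP {ws. s \<le> (\<Sum>t<n. Yv (ws t) i)} + measure_pmf.prob DP {ws. s \<le> - (\<Sum>t<n. Yv (ws t) i)}"
      by (rule measure_subadditive) (auto simp: measure_pmf.emeasure_finite)
    also have "\<dots> \<le> exp (real n * lam\<^sup>2 - lam * s) + exp (real n * lam\<^sup>2 - lam * s)"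
      unfolding DPeq using tail_pos[OF i l0, of n s] tail_neg[OF i l0, of n s] lL unfolding L_def
      by (intro add_mono) auto
    also have "\<dots> = 2 / real k ^ 4" unfolding expo ek by simp
    finally show ?thesis .
  qed
  have pbad: "measure_pmf.prob DP bad \<le> 2 / real k ^ 3"
  proof -
    have "measure_pmf.prob DP bad \<le> (\<Sum>i\<in>R. measure_pmf.prob DP {ws. s < \<bar>X ws i\<bar>})"
      unfolding bad_def by (rule measure_pmf.finite_measure_subadditive_finite) (use finR in auto)
    also have "\<dots> \<le> (\<Sum>i\<in>R. 2 / real k ^ 4)" by (intro sum_mono tail)
    also have "\<dots> = real (card R) * (2 / real k ^ 4)" by simp
    also have "\<dots> \<le> real k * (2 / real k ^ 4)" using cardRk by (intro mult_right_mono) auto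
    also have "\<dots> = 2 / real k ^ 3" using kpos' by (simp add: field_simps power_eq_if)
    finally show ?thesis .
  qed
  have sqlk: "sqrt lk \<le> lk" using lk1 by (intro sqrt_le_self') simp
  have s_le1: "s \<le> 4 * lk ^ 1 * sqrt (real n)"
  proof -
    have "s = 4 * (sqrt (real n) * sqrt lk)" unfolding s_def q_def by (simp add: real_sqrt_mult)
    also have "\<dots> \<le> 4 * (sqrt (real n) * lk)" using sqlk by (intro mult_left_mono) auto
    finally show ?thesis by (simp add: ac_simps)
  qed
  have s_le2: "sqrt (real r) * s \<le> 4 * lk ^ 1 * sqrt (real n * real r)"
  proof -
    have "sqrt (real r) * s = 4 * (sqrt (real n * real r) * sqrt lk)"
      unfolding s_def q_def by (simp add: real_sqrt_mult algebra_simps)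
    also have "\<dots> \<le> 4 * (sqrt (real n * real r) * lk)" using sqlk by (intro mult_left_mono) auto
    finally show ?thesis by (simp add: ac_simps)
  qed
  have good: "ws \<in> {ws. l2_on R (whitened_grad n D k A x ws) \<le> 4 * (ln (real k)) ^ 1 * sqrt (real n * real r) \<and>
               linf_on R (whitened_grad n D k A x ws) \<le> 4 * (ln (real k)) ^ 1 * sqrt (real n)}"
    if nb: "ws \<notin> bad" for ws
  proof -
    have bd: "\<bar>whitened_grad n D k A x ws i\<bar> \<le> s" if i: "i \<in> R" for i
      using nb i unfolding bad_def X_def wg_decomp by force
    have "linf_on R (whitened_grad n D k A x ws) \<le> s"
      unfolding linf_on_def using finR Rne bd by (subst Max_le_iff) auto
    then have c2: "linf_on R (whitened_grad n D k A x ws) \<le> 4 * (ln (real k)) ^ 1 * sqrt (real n)"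
      using s_le1 unfolding lk_def by linarith
    have s0: "0 \<le> s" unfolding s_def using q0 by simp
    have "(\<Sum>i\<in>R. (whitened_grad n D k A x ws i)\<^sup>2) \<le> (\<Sum>i\<in>R. s\<^sup>2)"
    proof (intro sum_mono)
      fix i assume i: "i \<in> R"
      show "(whitened_grad n D k A x ws i)\<^sup>2 \<le> s\<^sup>2"
        using bd[OF i] s0 by (metis abs_le_square_iff abs_of_nonneg)
    qed
    also have "\<dots> = real (card R) * s\<^sup>2" by simp
    also have "\<dots> \<le> real r * s\<^sup>2" using cardR by (intro mult_right_mono) auto
    finally have "l2_on R (whitened_grad n D k A x ws) \<le> sqrt (real r * s\<^sup>2)"
      unfolding l2_on_def by (rule real_sqrt_le_mono)
    also have "\<dots> = sqrt (real r) * s" using s0 by (simp add: real_sqrt_mult)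
    finally have c1: "l2_on R (whitened_grad n D k A x ws) \<le> 4 * (ln (real k)) ^ 1 * sqrt (real n * real r)"
      using s_le2 unfolding lk_def by linarith
    show ?thesis using c1 c2 by simp
  qed
  have "1 - 2 / real k ^ 3 \<le> 1 - measure_pmf.prob DP bad" using pbad by simp
  also have "\<dots> = measure_pmf.prob DP (UNIV - bad)"
    using measure_pmf.prob_compl[of bad DP] by simp
  also have "\<dots> \<le> measure_pmf.prob DP {ws. l2_on R (whitened_grad n D k A x ws) \<le> 4 * (ln (real k)) ^ 1 * sqrt (real n * real r) \<and>
               linf_on R (whitened_grad n D k A x ws) \<le> 4 * (ln (real k)) ^ 1 * sqrt (real n)}"
    by (rule measure_pmf.finite_measure_mono) (use good in auto)
  finally show ?thesis unfolding DP_def .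
qed

end

theorem lemma5p2:
  "\<exists>c > 0. \<exists>(C::real) > 0. \<exists>a::nat. \<exists>\<delta>::nat \<Rightarrow> real. \<delta> \<longlonglongrightarrow> 0 \<and>
     (\<forall>k D r n (\<tau>::real) (\<kappa>::real) A x.
        topic_matrix D k A \<and> simplex_pt k x \<and> r \<ge> 1 \<and> 0 < \<tau> \<and> \<tau> \<le> 1 \<and> \<kappa> > 0 \<and>
        assm_A1 k r \<tau> x \<and> assm_A2 D k r \<kappa> A \<and>
        real n \<ge> c * \<kappa>\<^sup>2 * (real r)\<^sup>2 * ln (real k) / \<tau>\<^sup>2 \<longrightarrow>
        measure_pmf.prob (document_pmf n D k A x)
          {ws. l2_on (supp_set k x) (whitened_grad n D k A x ws)
                 \<le> C * (ln (real k)) ^ a * sqrt (real n * real r) \<and>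
               linf_on (supp_set k x) (whitened_grad n D k A x ws)
                 \<le> C * (ln (real k)) ^ a * sqrt (real n)}
        \<ge> 1 - \<delta> k)"
proof -
  define \<delta> :: "nat \<Rightarrow> real" where "\<delta> = (\<lambda>k. if k < 3 then 1 else 2 / real k ^ 3)"
  have t0: "(\<lambda>k. 2 * (inverse (real k)) ^ 3) \<longlonglongrightarrow> 2 * 0 ^ 3"
    by (intro tendsto_intros lim_inverse_n)
  have ev: "eventually (\<lambda>k. 2 * (inverse (real k)) ^ 3 = \<delta> k) sequentially"
    unfolding eventually_sequentially \<delta>_def
    by (rule exI[of _ 3]) (simp add: power_inverse divide_inverse)
  have lim: "\<delta> \<longlonglongrightarrow> 0"
    using Lim_transform_eventually[OF t0 ev] by simp
  have main: "\<forall>k D r n (\<tau>::real) (\<kappa>::real) A x.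
        topic_matrix D k A \<and> simplex_pt k x \<and> r \<ge> 1 \<and> 0 < \<tau> \<and> \<tau> \<le> 1 \<and> \<kappa> > 0 \<and>
        assm_A1 k r \<tau> x \<and> assm_A2 D k r \<kappa> A \<and>
        real n \<ge> 16 * \<kappa>\<^sup>2 * (real r)\<^sup>2 * ln (real k) / \<tau>\<^sup>2 \<longrightarrow>
        measure_pmf.prob (document_pmf n D k A x)
          {ws. l2_on (supp_set k x) (whitened_grad n D k A x ws)
                 \<le> 4 * (ln (real k)) ^ 1 * sqrt (real n * real r) \<and>
               linf_on (supp_set k x) (whitened_grad n D k A x ws)
                 \<le> 4 * (ln (real k)) ^ 1 * sqrt (real n)}
        \<ge> 1 - \<delta> k"
  proof (intro allI impI)
    fix k D r n and \<tau> \<kappa> :: real and A x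
    assume h: "topic_matrix D k A \<and> simplex_pt k x \<and> r \<ge> 1 \<and> 0 < \<tau> \<and> \<tau> \<le> 1 \<and> \<kappa> > 0 \<and>
          assm_A1 k r \<tau> x \<and> assm_A2 D k r \<kappa> A \<and>
          real n \<ge> 16 * \<kappa>\<^sup>2 * (real r)\<^sup>2 * ln (real k) / \<tau>\<^sup>2"
    show "measure_pmf.prob (document_pmf n D k A x)
          {ws. l2_on (supp_set k x) (whitened_grad n D k A x ws)
                 \<le> 4 * (ln (real k)) ^ 1 * sqrt (real n * real r) \<and>
               linf_on (supp_set k x) (whitened_grad n D k A x ws)
                 \<le> 4 * (ln (real k)) ^ 1 * sqrt (real n)}
          \<ge> 1 - \<delta> k"
    proof (cases "k < 3")
      case True then show ?thesis unfolding \<delta>_def by simp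
    next
      case False
      interpret tset D k r \<tau> \<kappa> A x
        by unfold_locales (use h in auto)
      have "1 - 2 / real k ^ 3 \<le> measure_pmf.prob (document_pmf n D k A x)
          {ws. l2_on (supp_set k x) (whitened_grad n D k A x ws)
                 \<le> 4 * (ln (real k)) ^ 1 * sqrt (real n * real r) \<and>
               linf_on (supp_set k x) (whitened_grad n D k A x ws)
                 \<le> 4 * (ln (real k)) ^ 1 * sqrt (real n)}"
        by (rule key) (use h False in auto)
      then show ?thesis unfolding \<delta>_def using False by simp
    qed
  qed
  show ?thesis
    apply (rule exI[of _ "16::real"], rule conjI, simp)
    apply (rule exI[of _ "4::real"], rule conjI, simp)
    apply (rule exI[of _ "1::nat"], rule exI[of _ \<delta>])
    by (intro conjI lim main)
qed

end
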